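(* Let $0\le\gamma<1$, $k\in[0,1]$, and let $f=h+\overline{g}$ be a harmonic mapping on $\Omega_\gamma$, where $h,g$ are analytic on $\Omega_\gamma$, $|h(z)|\le 1$ for all $z\in\Omega_\gamma$, $|g'(z)|\le k|h'(z)|$ for all $z\in\Omega_\gamma$, and $h(z)=\sum_{n=0}^\infty a_n z^n$, $g(z)=\sum_{n=1}^\infty b_n z^n$ for $z\in\mathbb{D}$ (so $g(0)=0$). Then $$\sum_{n=0}^\infty |a_n| r^n+\sum_{n=1}^\infty |b_n| r^n\le 1\qquad\text{for all } 0\le r\le r_0:=\frac{1+\gamma}{3+2k+\gamma}.$$ The radius $r_0$ is best possible: for every $r\in(r_0,1)$ there is such a mapping $f$ for which the left-hand side exceeds $1$.
   Context: $\mathbb{D}$ is the open unit disk. For $0\le\gamma<1$, $\Omega_\gamma=\{z\in\mathbb{C}: |z+\frac{\gamma}{1-\gamma}|<\frac{1}{1-\gamma}\}$, a disk containing $\mathbb{D}$. A harmonic mapping on a simply connected domain is a complex-valued function $f$ with $\Delta f=0$; it can be written $f=h+\overline{g}$ with $h,g$ analytic. *)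

theory Defs
  imports "HOL-Complex_Analysis.Complex_Analysis"
begin

definition Omega :: "real \<Rightarrow> complex set" where
  "Omega \<gamma> = ball (- complex_of_real (\<gamma> / (1 - \<gamma>))) (1 / (1 - \<gamma>))"

text \<open>The class of harmonic mappings f = h + conj g on Omega_gamma considered in the theorem,
  together with the Taylor coefficients a (of h) and b (of g, indexed from 1) on the unit disk.\<close>
definition admissible ::
  "real \<Rightarrow> real \<Rightarrow> (complex \<Rightarrow> complex) \<Rightarrow> (complex \<Rightarrow> complex) \<Rightarrow> (nat \<Rightarrow> complex) \<Rightarrow> (nat \<Rightarrow> complex) \<Rightarrow> bool"
  where
  "admissible \<gamma> k h g a b \<longleftrightarrow>
     h holomorphic_on Omega \<gamma> \<and> g holomorphic_on Omega \<gamma> \<and>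
     (\<forall>z\<in>Omega \<gamma>. norm (h z) \<le> 1) \<and>
     (\<forall>z\<in>Omega \<gamma>. norm (deriv g z) \<le> k * norm (deriv h z)) \<and>
     (\<forall>z\<in>ball 0 1. (\<lambda>n. a n * z ^ n) sums h z) \<and>
     (\<forall>z\<in>ball 0 1. (\<lambda>n. b (n + 1) * z ^ (n + 1)) sums g z)"

definition bohr_sum :: "(nat \<Rightarrow> complex) \<Rightarrow> (nat \<Rightarrow> complex) \<Rightarrow> real \<Rightarrow> real" where
  "bohr_sum a b r = (\<Sum>n. norm (a n) * r ^ n) + (\<Sum>n. norm (b (n + 1)) * r ^ (n + 1))"

end

theory Submission
  imports Defs
begin

lemma mobius_lt:
  fixes u c :: complex
  assumes "norm u < 1" "norm c < 1"
  shows "norm ((u - c) / (1 - cnj c * u)) < 1"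
proof -
  have key: "(norm (1 - cnj c * u))^2 - (norm (u - c))^2 = (1 - (norm u)^2) * (1 - (norm c)^2)"
    unfolding cmod_power2 by (simp add: algebra_simps power2_eq_square)
  have "(1 - (norm u)^2) * (1 - (norm c)^2) > 0"
    using assms by (simp add: abs_square_less_1)
  hence lt: "(norm (u - c))^2 < (norm (1 - cnj c * u))^2" using key by linarith
  hence "norm (u - c) < norm (1 - cnj c * u)"
    by (meson norm_ge_zero power_less_imp_less_base)
  moreover have "norm (1 - cnj c * u) > 0" using calculation
    by (meson norm_ge_zero order_le_less_trans)
  ultimately show ?thesis by (simp add: norm_divide divide_less_eq)
qed

lemma SP0_strict:
  fixes G :: "complex \<Rightarrow> complex"
  assumes hol: "G holomorphic_on ball 0 1" and bd: "\<And>w. norm w < 1 \<Longrightarrow> norm (G w) < 1"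
  shows "norm (deriv G 0) \<le> 1 - (norm (G 0))^2"
proof -
  define c where "c = G 0"
  have c: "norm c < 1" using bd[of 0] by (simp add: c_def)
  define H where "H = (\<lambda>w. (G w - c) / (1 - cnj c * G w))"
  have den: "1 - cnj c * G w \<noteq> 0" if "norm w < 1" for w
  proof
    assume "1 - cnj c * G w = 0"
    hence "cnj c * G w = 1" by simp
    hence "norm c * norm (G w) = 1" by (metis complex_mod_cnj norm_mult norm_one)
    moreover have "norm c * norm (G w) \<le> norm c"
      using bd[OF that] by (simp add: mult_left_le)
    ultimately show False using c by linarith
  qed
  have holH: "H holomorphic_on ball 0 1" unfolding H_def
    by (intro holomorphic_intros hol) (use den in auto)
  have H0: "H 0 = 0" by (simp add: H_def c_def)
  have Hlt: "norm (H w) < 1" if "norm w < 1" for w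
    unfolding H_def using mobius_lt[OF bd[OF that] c] .
  have "norm (deriv H 0) \<le> 1"
    using Schwarz_Lemma(2)[OF holH H0 Hlt, of 0] by simp
  have dG: "(G has_field_derivative deriv G 0) (at 0)"
    using hol by (intro holomorphic_derivI[of _ "ball 0 1"]) auto
  have cc: "1 - cnj c * c = complex_of_real (1 - (norm c)^2)"
    using complex_norm_square[of c] by (simp add: mult.commute)
  have cc0: "1 - (norm c)^2 > 0" using c by (simp add: abs_square_less_1)
  have "(H has_field_derivative deriv G 0 / (1 - cnj c * c)) (at 0)"
  proof -
    have d1: "((\<lambda>w. G w - c) has_field_derivative deriv G 0) (at 0)"
      using dG by (auto intro!: derivative_eq_intros)
    have d2: "((\<lambda>w. 1 - cnj c * G w) has_field_derivative - (cnj c * deriv G 0)) (at 0)"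
      using dG by (auto intro!: derivative_eq_intros)
    have "(H has_field_derivative (deriv G 0 * (1 - cnj c * G 0) - (G 0 - c) * - (cnj c * deriv G 0))
             / ((1 - cnj c * G 0) * (1 - cnj c * G 0))) (at 0)"
      unfolding H_def by (rule DERIV_divide[OF d1 d2]) (use den[of 0] in simp)
    thus ?thesis using den[of 0] by (simp add: c_def)
  qed
  hence "deriv H 0 = deriv G 0 / (1 - cnj c * c)" by (rule DERIV_imp_deriv)
  hence "norm (deriv H 0) = norm (deriv G 0) / norm (1 - cnj c * c)"
    by (simp add: norm_divide)
  also have "norm (1 - cnj c * c) = 1 - (norm c)^2"
    unfolding cc norm_of_real using cc0 by simp
  finally have "norm (deriv H 0) = norm (deriv G 0) / (1 - (norm c)^2)" .
  with \<open>norm (deriv H 0) \<le> 1\<close> cc0 show ?thesis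
    by (simp add: c_def divide_le_eq)
qed

lemma SP0:
  fixes G :: "complex \<Rightarrow> complex"
  assumes hol: "G holomorphic_on ball 0 1" and bd: "\<And>w. norm w < 1 \<Longrightarrow> norm (G w) \<le> 1"
  shows "norm (deriv G 0) \<le> 1 - (norm (G 0))^2"
proof -
  have key: "t * norm (deriv G 0) \<le> 1 - t^2 * (norm (G 0))^2" if t: "0 < t" "t < 1" for t :: real
  proof -
    have h1: "(\<lambda>w. of_real t * G w) holomorphic_on ball 0 1" by (intro holomorphic_intros hol)
    have h2: "norm (of_real t * G w) < 1" if "norm w < 1" for w
    proof -
      have "norm (of_real t * G w) = t * norm (G w)" using t by (simp add: norm_mult)
      also have "\<dots> \<le> t" using bd[OF that] t by (simp add: mult_left_le)
      finally show ?thesis using t by linarith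
    qed
    have "deriv (\<lambda>w. of_real t * G w) 0 = of_real t * deriv G 0"
      by (rule deriv_cmult) (use hol in \<open>auto intro!: holomorphic_on_imp_differentiable_at\<close>)
    with SP0_strict[OF h1 h2] show ?thesis using t
      by (simp add: norm_mult power_mult_distrib)
  qed
  have "norm (deriv G 0) \<le> 1 - (norm (G 0))^2"
  proof (rule tendsto_le[of "at_left (1::real)"])
    show "((\<lambda>t. t * norm (deriv G 0)) \<longlongrightarrow> norm (deriv G 0)) (at_left 1)"
      by (auto intro!: tendsto_eq_intros)
    show "((\<lambda>t. 1 - t^2 * (norm (G 0))^2) \<longlongrightarrow> 1 - (norm (G 0))^2) (at_left (1::real))"
      by (auto intro!: tendsto_eq_intros)
    show "\<forall>\<^sub>F t in at_left 1. t * norm (deriv G 0) \<le> 1 - t^2 * (norm (G 0))^2"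
    proof -
      have ev: "eventually (\<lambda>x. x \<in> {0<..<1}) (at_left (1::real))"
        by (rule eventually_at_left_real) simp
      show ?thesis using ev by eventually_elim (use key in auto)
    qed
  qed auto
  thus ?thesis .
qed

lemma cis_pow_m: "m > 0 \<Longrightarrow> cis (2 * pi / real m) ^ m = 1"
  unfolding Complex.DeMoivre by simp

lemma roots_sum:
  assumes m: "m > 0"
  shows "(\<Sum>j<m. (cis (2 * pi / real m) ^ n) ^ j) = (if m dvd n then of_nat m else 0)"
proof (cases "m dvd n")
  case True
  then obtain q where q: "n = m * q" by blast
  have "cis (2 * pi / real m) ^ n = (cis (2 * pi / real m) ^ m) ^ q" by (simp add: q power_mult)
  also have "cis (2 * pi / real m) ^ m = 1" using m by (rule cis_pow_m)
  finally show ?thesis using True by simp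
next
  case False
  define x where "x = cis (2 * pi / real m) ^ n"
  have x: "x = cis (2 * pi * real n / real m)" by (simp add: x_def Complex.DeMoivre mult_ac)
  have "x \<noteq> 1"
  proof
    assume "x = 1"
    hence "cos (2 * pi * real n / real m) = 1" by (simp add: x complex_eq_iff)
    then obtain k :: int where "2 * pi * real n / real m = real_of_int k * 2 * pi"
      by (subst (asm) cos_one_2pi_int) blast
    hence "real n = real m * real_of_int k" using m by (simp add: field_simps)
    hence "int n = int m * k" by (metis of_int_eq_iff of_int_mult of_int_of_nat_eq)
    hence "int m dvd int n" by simp
    with False show False by simp
  qed
  have "x ^ m = (cis (2 * pi / real m) ^ m) ^ n" by (simp add: x_def power_mult[symmetric] mult.commute)
  also have "cis (2 * pi / real m) ^ m = 1" using m by (rule cis_pow_m)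
  finally have "x ^ m = 1" by simp
  with \<open>x \<noteq> 1\<close> show ?thesis using False by (simp add: geometric_sum x_def[symmetric])
qed

lemma exists_root:
  fixes w :: complex
  assumes m: "m > 0"
  shows "\<exists>z. z ^ m = w \<and> norm z = root m (norm w)"
proof (cases "w = 0")
  case True thus ?thesis using m by (intro exI[of _ 0]) auto
next
  case False
  define c' where "c' = complex_of_real (root m (norm w)) * cis (Arg w / m)"
  have "\<forall>a\<in>{z. z ^ m = 1}. c' * a \<in> {z. z ^ m = w}"
    using bij_betwE[OF bij_betw_nth_root_unity[OF False m]] by (simp add: c'_def)
  from this[rule_format, of 1] have "c' * 1 \<in> {z. z ^ m = w}" by simp
  moreover have "norm c' = root m (norm w)" by (simp add: c'_def norm_mult abs_of_nonneg real_root_ge_zero)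
  ultimately show ?thesis by auto
qed

lemma wiener:
  fixes F :: "complex \<Rightarrow> complex"
  assumes hol: "F holomorphic_on ball 0 1" and bd: "\<And>w. norm w < 1 \<Longrightarrow> norm (F w) \<le> 1"
    and m: "m > 0"
  shows "norm ((deriv ^^ m) F 0 / fact m) \<le> 1 - (norm (F 0))^2"
proof -
  define c where "c = (\<lambda>n. (deriv ^^ n) F 0 / fact n)"
  have pw: "(\<lambda>n. c n * z ^ n) sums F z" if "norm z < 1" for z
    using holomorphic_power_series[OF hol, of z] that by (simp add: c_def)
  define \<epsilon> where "\<epsilon> = cis (2 * pi / real m)"
  have avg: "(\<lambda>n. if m dvd n then c n * z ^ n else 0) sums ((\<Sum>j<m. F (\<epsilon> ^ j * z)) / of_nat m)"
    if z: "norm z < 1" for z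
  proof -
    have "(\<lambda>n. \<Sum>j<m. c n * (\<epsilon> ^ j * z) ^ n) sums (\<Sum>j<m. F (\<epsilon> ^ j * z))"
      by (intro sums_sum pw) (use z in \<open>simp add: \<epsilon>_def norm_mult norm_power\<close>)
    hence "(\<lambda>n. (\<Sum>j<m. c n * (\<epsilon> ^ j * z) ^ n) / of_nat m) sums ((\<Sum>j<m. F (\<epsilon> ^ j * z)) / of_nat m)"
      by (rule sums_divide)
    moreover have "(\<Sum>j<m. c n * (\<epsilon> ^ j * z) ^ n) / of_nat m = (if m dvd n then c n * z ^ n else 0)" for n
    proof -
      have "(\<Sum>j<m. c n * (\<epsilon> ^ j * z) ^ n) = c n * z ^ n * (\<Sum>j<m. (\<epsilon> ^ n) ^ j)"
        by (simp add: sum_distrib_left power_mult_distrib power_mult[symmetric] mult.commute mult.left_commute)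
      thus ?thesis using m by (simp add: roots_sum \<epsilon>_def)
    qed
    ultimately show ?thesis by simp
  qed
  have avgbd: "norm ((\<Sum>j<m. F (\<epsilon> ^ j * z)) / of_nat m) \<le> 1" if z: "norm z < 1" for z
  proof -
    have "norm (\<Sum>j<m. F (\<epsilon> ^ j * z)) \<le> (\<Sum>j<m. norm (F (\<epsilon> ^ j * z)))" by (rule norm_sum)
    also have "\<dots> \<le> (\<Sum>j<m. 1)"
      by (intro sum_mono bd) (use z in \<open>simp add: \<epsilon>_def norm_mult norm_power\<close>)
    finally show ?thesis using m by (simp add: norm_divide)
  qed
  have sub: "(\<lambda>q. c (q * m) * w ^ q) sums ((\<Sum>j<m. F (\<epsilon> ^ j * z)) / of_nat m)"
    if "norm z < 1" "z ^ m = w" for z w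
  proof -
    have sm: "strict_mono (\<lambda>q::nat. q * m)" using m by (intro strict_monoI) simp
    have Z: "(\<lambda>n. if m dvd n then c n * z ^ n else 0) n = 0" if "n \<notin> range (\<lambda>q. q * m)" for n
      using that by (auto elim!: dvdE simp: mult.commute)
    have "(\<lambda>q. (\<lambda>n. if m dvd n then c n * z ^ n else 0) (q * m)) sums ((\<Sum>j<m. F (\<epsilon> ^ j * z)) / of_nat m)"
      using sums_mono_reindex[of "\<lambda>q. q * m" "\<lambda>n. if m dvd n then c n * z ^ n else 0", OF sm Z] avg[OF that(1)]
      by blast
    moreover have "z ^ (q * m) = w ^ q" for q using that(2) by (metis power_mult mult.commute)
    ultimately show ?thesis by simp
  qed
  have sumw: "\<exists>S. (\<lambda>q. c (q * m) * w ^ q) sums S \<and> norm S \<le> 1" if w: "norm w < 1" for w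
  proof -
    obtain z where z: "z ^ m = w" "norm z = root m (norm w)" using exists_root[OF m] by blast
    have "norm z < 1" using z(2) w m by (simp add: real_root_lt_1_iff)
    thus ?thesis using sub[OF _ z(1)] avgbd by blast
  qed
  define C where "C = Abs_fps (\<lambda>q. c (q * m))"
  have rad: "fps_conv_radius C \<ge> 1"
    unfolding fps_conv_radius_def
  proof (rule conv_radius_geI_ex')
    fix r :: real assume "0 < r" "ereal r < 1"
    hence "norm (complex_of_real r) < 1" by simp
    from sumw[OF this] show "summable (\<lambda>n. fps_nth C n * complex_of_real r ^ n)"
      by (auto simp: C_def sums_iff)
  qed
  have ball_sub: "ball 0 1 \<subseteq> eball 0 (fps_conv_radius C)"
    by (rule ball_eball_mono) (use rad in \<open>simp add: one_ereal_def\<close>)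
  define G where "G = eval_fps C"
  have holG: "G holomorphic_on ball 0 1" unfolding G_def by (rule holomorphic_on_eval_fps[OF ball_sub])
  have bdG: "norm (G w) \<le> 1" if w: "norm w < 1" for w
  proof -
    obtain S where S: "(\<lambda>q. c (q * m) * w ^ q) sums S" "norm S \<le> 1" using sumw[OF w] by blast
    have "G w = S" unfolding G_def eval_fps_def using S(1) by (simp add: C_def sums_iff)
    thus ?thesis using S(2) by simp
  qed
  have rpos: "fps_conv_radius C > 0" using order.strict_trans2[OF _ rad, of 0] by simp
  have G0: "G 0 = F 0" by (simp add: G_def eval_fps_at_0 C_def c_def)
  have "fps_nth C 1 = (deriv ^^ 1) (eval_fps C) 0 / fact 1" by (rule fps_nth_conv_deriv[OF rpos])
  hence dG: "deriv G 0 = c m" by (simp add: G_def C_def)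
  show ?thesis using SP0[OF holG bdG] G0 dG by (simp add: c_def)
qed

lemma fps_exp_unique:
  fixes f g :: "complex \<Rightarrow> complex"
  assumes "f has_fps_expansion F" "g has_fps_expansion G" "eventually (\<lambda>z. f z = g z) (nhds 0)"
  shows "F = G"
proof -
  have "g has_fps_expansion F" using assms(1) has_fps_expansion_cong[OF assms(3) refl] by simp
  thus ?thesis using assms(2) by (simp add: fps_eq_iff fps_nth_fps_expansion)
qed

lemma g1nz:
  assumes "0 \<le> \<gamma>" shows "1 + complex_of_real \<gamma> \<noteq> 0"
proof -
  have "1 + complex_of_real \<gamma> = complex_of_real (1 + \<gamma>)" by simp
  moreover have "1 + \<gamma> \<noteq> 0" using assms by simp
  ultimately show ?thesis by (metis of_real_eq_0_iff)
qed

lemma n1g: "0 \<le> \<gamma> \<Longrightarrow> norm (1 + complex_of_real \<gamma>) = 1 + \<gamma>"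
proof -
  assume g: "0 \<le> \<gamma>"
  have "1 + complex_of_real \<gamma> = complex_of_real (1 + \<gamma>)" by simp
  hence "norm (1 + complex_of_real \<gamma>) = \<bar>1 + \<gamma>\<bar>" by (simp only: norm_of_real)
  thus ?thesis using g by simp
qed

lemma n1mg: "\<gamma> \<le> 1 \<Longrightarrow> norm (1 - complex_of_real \<gamma>) = 1 - \<gamma>"
proof -
  assume g: "\<gamma> \<le> 1"
  have "1 - complex_of_real \<gamma> = complex_of_real (1 - \<gamma>)" by simp
  hence "norm (1 - complex_of_real \<gamma>) = \<bar>1 - \<gamma>\<bar>" by (simp only: norm_of_real)
  thus ?thesis using g by simp
qed

definition psi :: "real \<Rightarrow> complex \<Rightarrow> complex" where
  "psi \<gamma> z = z / (1 + complex_of_real \<gamma> - complex_of_real \<gamma> * z)"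

definition Psi :: "real \<Rightarrow> complex fps" where
  "Psi \<gamma> = Abs_fps (\<lambda>n. if n = 0 then 0 else complex_of_real (\<gamma> ^ (n - 1) / (1 + \<gamma>) ^ n))"

definition Wf :: "real \<Rightarrow> complex fps" where
  "Wf \<gamma> = Abs_fps (\<lambda>n. if n = 0 then 1 else complex_of_real (1 / (1 + \<gamma>)))"

lemma Psi_sums:
  fixes z :: complex
  assumes g: "0 \<le> \<gamma>" and z: "norm z < 1"
  shows "(\<lambda>n. fps_nth (Psi \<gamma>) n * z ^ n) sums (psi \<gamma> z)"
proof -
  define q where "q = complex_of_real \<gamma> * z / (1 + \<gamma>)"
  have "norm q = \<gamma> * norm z / (1 + \<gamma>)" using g by (simp add: q_def norm_mult norm_divide n1g)
  also have "\<dots> < 1" using g z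
    by (simp add: divide_less_eq) (smt (verit) mult_left_le mult_nonneg_nonneg norm_ge_zero)
  finally have "norm q < 1" .
  hence "(\<lambda>n. q ^ n) sums (1 / (1 - q))" by (rule geometric_sums)
  hence "(\<lambda>n. z / (1 + \<gamma>) * q ^ n) sums (z / (1 + \<gamma>) * (1 / (1 - q)))" by (rule sums_mult)
  moreover have "z / (1 + \<gamma>) * (1 / (1 - q)) = psi \<gamma> z"
  proof -
    have "1 + complex_of_real \<gamma> \<noteq> 0" using g
      by (simp add: g1nz)
    moreover have "1 + complex_of_real \<gamma> - \<gamma> * z \<noteq> 0"
    proof
      assume "1 + complex_of_real \<gamma> - \<gamma> * z = 0"
      hence "norm (complex_of_real (1 + \<gamma>)) = norm (\<gamma> * z)" by (simp add: algebra_simps)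
      hence "1 + \<gamma> = \<gamma> * norm z" using g by (simp add: norm_mult n1g)
      moreover have "\<gamma> * norm z \<le> \<gamma>" using g z by (simp add: mult_left_le)
      ultimately show False by simp
    qed
    ultimately have nz: "1 + complex_of_real \<gamma> \<noteq> 0" "1 + complex_of_real \<gamma> - complex_of_real \<gamma> * z \<noteq> 0"
      by auto
    have "1 - q = (1 + complex_of_real \<gamma> - complex_of_real \<gamma> * z) / (1 + complex_of_real \<gamma>)"
      using nz by (simp add: q_def field_simps)
    hence "z / (1 + \<gamma>) * (1 / (1 - q)) = z / (1 + complex_of_real \<gamma>) * ((1 + complex_of_real \<gamma>) / (1 + complex_of_real \<gamma> - complex_of_real \<gamma> * z))"
      by simp
    also have "\<dots> = psi \<gamma> z" using nz by (simp add: psi_def)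
    finally show ?thesis .
  qed
  moreover have "fps_nth (Psi \<gamma>) (Suc n) * z ^ Suc n = z / (1 + \<gamma>) * q ^ n" for n
    by (simp add: Psi_def q_def power_divide power_mult_distrib field_simps)
  ultimately have "(\<lambda>n. fps_nth (Psi \<gamma>) (Suc n) * z ^ Suc n) sums (psi \<gamma> z)" by simp
  from sums_Suc[OF this] show ?thesis by (simp add: Psi_def)
qed

lemma den_nz:
  fixes z :: complex
  assumes g: "0 \<le> \<gamma>" and z: "norm z < 1"
  shows "1 + complex_of_real \<gamma> - \<gamma> * z \<noteq> 0"
proof
  assume "1 + complex_of_real \<gamma> - \<gamma> * z = 0"
  hence "norm (complex_of_real (1 + \<gamma>)) = norm (\<gamma> * z)" by (simp add: algebra_simps)
  hence "1 + \<gamma> = \<gamma> * norm z" using g by (simp add: norm_mult n1g)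
  moreover have "\<gamma> * norm z \<le> \<gamma>" using g z by (simp add: mult_left_le)
  ultimately show False by simp
qed

lemma Psi_expansion:
  assumes g: "0 \<le> \<gamma>"
  shows "psi \<gamma> has_fps_expansion Psi \<gamma>"
proof (rule has_fps_expansionI)
  have "eventually (\<lambda>z. z \<in> ball (0::complex) 1) (nhds 0)"
    by (rule eventually_nhds_in_open) auto
  thus "\<forall>\<^sub>F u in nhds 0. (\<lambda>n. fps_nth (Psi \<gamma>) n * u ^ n) sums (psi \<gamma> u)"
    by eventually_elim (use Psi_sums[OF g] in auto)
qed

lemma Wf_expansion:
  assumes g: "0 \<le> \<gamma>"
  shows "(\<lambda>z::complex. 1 + z / ((1 + complex_of_real \<gamma>) * (1 - z))) has_fps_expansion Wf \<gamma>"
proof (rule has_fps_expansionI)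
  have "eventually (\<lambda>z. z \<in> ball (0::complex) 1) (nhds 0)"
    by (rule eventually_nhds_in_open) auto
  thus "\<forall>\<^sub>F u::complex in nhds 0. (\<lambda>n. fps_nth (Wf \<gamma>) n * u ^ n) sums (1 + u / ((1 + complex_of_real \<gamma>) * (1 - u)))"
  proof eventually_elim
    case (elim z)
    hence z: "norm z < 1" by simp
    have "(\<lambda>n. z ^ n) sums (1 / (1 - z))" by (rule geometric_sums[OF z])
    hence "(\<lambda>n. z / (1 + \<gamma>) * z ^ n) sums (z / (1 + \<gamma>) * (1 / (1 - z)))" by (rule sums_mult)
    moreover have "fps_nth (Wf \<gamma>) (Suc n) * z ^ Suc n = z / (1 + \<gamma>) * z ^ n" for n
      by (simp add: Wf_def)
    ultimately have "(\<lambda>n. fps_nth (Wf \<gamma>) (Suc n) * z ^ Suc n) sums (z / ((1 + complex_of_real \<gamma>) * (1 - z)))"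
      by simp
    from sums_Suc[OF this] show ?case by (simp add: Wf_def add.commute)
  qed
qed

lemma Psi_nth0: "fps_nth (Psi \<gamma>) 0 = 0" by (simp add: Psi_def)

lemma Psi_sum:
  assumes g: "0 \<le> \<gamma>" and n: "n \<ge> 1"
  shows "(\<Sum>i=0..n. fps_nth (Psi \<gamma> ^ i) n) = complex_of_real (1 / (1 + \<gamma>))"
proof -
  define Geo :: "complex fps" where "Geo = Abs_fps (\<lambda>_. 1)"
  have geo: "(\<lambda>u::complex. 1 / (1 - u)) has_fps_expansion Geo"
  proof (rule has_fps_expansionI)
    have "eventually (\<lambda>z. z \<in> ball (0::complex) 1) (nhds 0)"
      by (rule eventually_nhds_in_open) auto
    thus "\<forall>\<^sub>F u in nhds 0. (\<lambda>n. fps_nth Geo n * u ^ n) sums (1 / (1 - u))"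
      by eventually_elim (auto simp: Geo_def intro: geometric_sums)
  qed
  have comp: "((\<lambda>u::complex. 1 / (1 - u)) \<circ> psi \<gamma>) has_fps_expansion fps_compose Geo (Psi \<gamma>)"
    by (rule has_fps_expansion_compose[OF geo Psi_expansion[OF g] Psi_nth0])
  have ev: "eventually (\<lambda>z::complex. ((\<lambda>u::complex. 1 / (1 - u)) \<circ> psi \<gamma>) z
                 = 1 + z / ((1 + complex_of_real \<gamma>) * (1 - z))) (nhds 0)"
  proof -
    have "eventually (\<lambda>z. z \<in> ball (0::complex) 1) (nhds 0)"
      by (rule eventually_nhds_in_open) auto
    thus ?thesis
    proof eventually_elim
      case (elim z)
      hence z: "norm z < 1" by simp
      have d: "1 + complex_of_real \<gamma> - \<gamma> * z \<noteq> 0" by (rule den_nz[OF g z])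
      have z1: "1 - z \<noteq> 0" using z by auto
      have g1: "1 + complex_of_real \<gamma> \<noteq> 0" using g
        by (simp add: g1nz)
      define A where "A = 1 + complex_of_real \<gamma> - complex_of_real \<gamma> * z"
      have A: "A \<noteq> 0" using d by (simp add: A_def)
      have e1: "1 - psi \<gamma> z = (1 + complex_of_real \<gamma>) * (1 - z) / A"
      proof -
        have "psi \<gamma> z = z / A" by (simp add: psi_def A_def)
        hence "1 - psi \<gamma> z = (A - z) / A" using A by (simp add: field_simps)
        also have "A - z = (1 + complex_of_real \<gamma>) * (1 - z)" by (simp add: A_def algebra_simps)
        finally show ?thesis .
      qed
      have "1 / (1 - psi \<gamma> z) = A / ((1 + complex_of_real \<gamma>) * (1 - z))"
        unfolding e1 by simp
      also have "\<dots> = 1 + z / ((1 + complex_of_real \<gamma>) * (1 - z))"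
      proof -
        define D where "D = (1 + complex_of_real \<gamma>) * (1 - z)"
        have D: "D \<noteq> 0" using z1 g1 by (simp add: D_def)
        have "A = D + z" by (simp add: A_def D_def algebra_simps)
        hence "A / D = 1 + z / D" using D by (simp add: add_divide_distrib)
        thus ?thesis by (simp add: D_def)
      qed
      finally show ?case by simp
    qed
  qed
  have "fps_compose Geo (Psi \<gamma>) = Wf \<gamma>"
    by (rule fps_exp_unique[OF comp Wf_expansion[OF g] ev])
  hence "fps_nth (fps_compose Geo (Psi \<gamma>)) n = fps_nth (Wf \<gamma>) n" by simp
  thus ?thesis using n by (simp add: fps_compose_nth Geo_def Wf_def)
qed

lemma Psi_pow_nn:
  assumes g: "0 \<le> \<gamma>"
  shows "Im (fps_nth (Psi \<gamma> ^ i) n) = 0 \<and> Re (fps_nth (Psi \<gamma> ^ i) n) \<ge> 0"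
proof (induction i arbitrary: n)
  case 0 thus ?case by simp
next
  case (Suc i)
  have P: "Im (fps_nth (Psi \<gamma>) j) = 0 \<and> Re (fps_nth (Psi \<gamma>) j) \<ge> 0" for j
    using g by (simp add: Psi_def)
  have e: "fps_nth (Psi \<gamma> ^ Suc i) n = (\<Sum>j=0..n. fps_nth (Psi \<gamma>) j * fps_nth (Psi \<gamma> ^ i) (n - j))"
    by (simp add: fps_mult_nth)
  show ?case unfolding e using P Suc.IH
    by (auto simp: Im_sum Re_sum intro!: sum_nonneg)
qed

lemma coeff_bound_Omega:
  fixes h :: "complex \<Rightarrow> complex"
  assumes g: "0 \<le> \<gamma>" "\<gamma> < 1" and hol: "h holomorphic_on Omega \<gamma>"
    and bd: "\<And>z. z \<in> Omega \<gamma> \<Longrightarrow> norm (h z) \<le> 1" and n: "n \<ge> 1"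
  shows "norm ((deriv ^^ n) h 0 / fact n) \<le> (1 - (norm (h 0))^2) / (1 + \<gamma>)"
proof -
  define pinv where "pinv = (\<lambda>u::complex. (1 + \<gamma>) * u / (1 + \<gamma> * u))"
  have pinv_in: "pinv u \<in> Omega \<gamma>" if u: "norm u < 1" for u
  proof -
    have gu: "norm (of_real \<gamma> * u) < 1" using g u
      by (simp add: norm_mult) (smt (verit) mult_left_le norm_ge_zero)
    have d: "1 + complex_of_real \<gamma> * u \<noteq> 0"
      using gu by (metis add.commute add_diff_cancel_left' diff_0 norm_minus_cancel norm_one less_irrefl add_eq_0_iff2)
    have g1: "1 - complex_of_real \<gamma> \<noteq> 0" using g
      by (metis eq_iff_diff_eq_0 of_real_1 of_real_eq_iff less_irrefl)
    have eq: "pinv u + complex_of_real (\<gamma> / (1 - \<gamma>)) = (u - complex_of_real (- \<gamma>)) / (1 - cnj (complex_of_real (- \<gamma>)) * u) / (1 - complex_of_real \<gamma>)"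
      using d g1 by (simp add: pinv_def field_simps)
    have "norm ((u - complex_of_real (- \<gamma>)) / (1 - cnj (complex_of_real (- \<gamma>)) * u)) < 1"
      by (rule mobius_lt) (use u g in auto)
    moreover have "norm (pinv u + complex_of_real (\<gamma> / (1 - \<gamma>)))
       = norm ((u - complex_of_real (- \<gamma>)) / (1 - cnj (complex_of_real (- \<gamma>)) * u)) / (1 - \<gamma>)"
      unfolding eq norm_divide[of _ "1 - complex_of_real \<gamma>"] using g by (simp add: n1mg)
    ultimately have "norm (pinv u + complex_of_real (\<gamma> / (1 - \<gamma>))) < 1 / (1 - \<gamma>)"
      using g by (simp add: divide_strict_right_mono)
    moreover have "dist (- complex_of_real (\<gamma> / (1 - \<gamma>))) (pinv u) = norm (pinv u + complex_of_real (\<gamma> / (1 - \<gamma>)))"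
      by (metis dist_norm norm_minus_commute diff_minus_eq_add)
    ultimately show ?thesis unfolding Omega_def by (simp only: mem_ball)
  qed
  define F where "F = h \<circ> pinv"
  have holp: "pinv holomorphic_on ball 0 1"
  proof -
    have "1 + complex_of_real \<gamma> * u \<noteq> 0" if "u \<in> ball 0 1" for u
    proof -
      have "norm (of_real \<gamma> * u) < 1" using g that
        by (simp add: norm_mult) (smt (verit) mult_left_le norm_ge_zero)
      thus ?thesis by (metis add.commute add_diff_cancel_left' diff_0 norm_minus_cancel norm_one less_irrefl add_eq_0_iff2)
    qed
    thus ?thesis unfolding pinv_def by (intro holomorphic_intros) auto
  qed
  have holF: "F holomorphic_on ball 0 1" unfolding F_def
    by (rule holomorphic_on_compose_gen[OF holp hol]) (use pinv_in in auto)
  have bdF: "norm (F w) \<le> 1" if "norm w < 1" for w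
    using bd[OF pinv_in[OF that]] by (simp add: F_def)
  have F0: "F 0 = h 0" by (simp add: F_def pinv_def)
  define C where "C = fps_expansion F 0"
  have wC: "norm (fps_nth C i) \<le> 1 - (norm (h 0))^2" if "i \<ge> 1" for i
    using wiener[OF holF bdF, of i] that F0 by (simp add: C_def fps_expansion_def)
  have anF: "F analytic_on {0}"
    using holF analytic_on_open[of "ball 0 1" F] analytic_on_subset by auto
  have FC: "F has_fps_expansion C" unfolding C_def by (rule analytic_at_imp_has_fps_expansion_0[OF anF])
  have comp: "(F \<circ> psi \<gamma>) has_fps_expansion fps_compose C (Psi \<gamma>)"
    by (rule has_fps_expansion_compose[OF FC Psi_expansion[OF g(1)] Psi_nth0])
  have ev: "eventually (\<lambda>z. (F \<circ> psi \<gamma>) z = h z) (nhds 0)"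
  proof -
    have "eventually (\<lambda>z. z \<in> ball (0::complex) 1) (nhds 0)"
      by (rule eventually_nhds_in_open) auto
    thus ?thesis
    proof eventually_elim
      case (elim z)
      hence z: "norm z < 1" by simp
      have d: "1 + complex_of_real \<gamma> - \<gamma> * z \<noteq> 0" by (rule den_nz[OF g(1) z])
      have g1: "1 + complex_of_real \<gamma> \<noteq> 0" using g
        by (simp add: g1nz)
      define A where "A = 1 + complex_of_real \<gamma> - complex_of_real \<gamma> * z"
      have A: "A \<noteq> 0" using d by (simp add: A_def)
      have p: "psi \<gamma> z = z / A" by (simp add: psi_def A_def)
      have "1 + complex_of_real \<gamma> * (z / A) = (A + complex_of_real \<gamma> * z) / A" using A by (simp add: field_simps)
      also have "A + complex_of_real \<gamma> * z = 1 + complex_of_real \<gamma>" by (simp add: A_def)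
      finally have q: "1 + complex_of_real \<gamma> * (z / A) = (1 + complex_of_real \<gamma>) / A" .
      have "pinv (psi \<gamma> z) = (1 + complex_of_real \<gamma>) * (z / A) / ((1 + complex_of_real \<gamma>) / A)"
        unfolding pinv_def p q by simp
      also have "(1 + complex_of_real \<gamma>) * (z / A) = ((1 + complex_of_real \<gamma>) / A) * z" by simp
      also have "((1 + complex_of_real \<gamma>) / A) * z / ((1 + complex_of_real \<gamma>) / A) = z"
        using A g1 by simp
      finally have "pinv (psi \<gamma> z) = z" .
      thus ?case by (simp add: F_def)
    qed
  qed
  have hexp: "h has_fps_expansion fps_compose C (Psi \<gamma>)"
    using comp has_fps_expansion_cong[OF ev refl] by simp
  have "(deriv ^^ n) h 0 / fact n = fps_nth (fps_compose C (Psi \<gamma>)) n"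
    using fps_nth_fps_expansion[OF hexp] by simp
  also have "\<dots> = (\<Sum>i=0..n. fps_nth C i * fps_nth (Psi \<gamma> ^ i) n)" by (simp add: fps_compose_nth)
  also have "\<dots> = (\<Sum>i=1..n. fps_nth C i * fps_nth (Psi \<gamma> ^ i) n)"
    using n by (simp add: sum.atLeast_Suc_atMost)
  finally have eqa: "(deriv ^^ n) h 0 / fact n = (\<Sum>i=1..n. fps_nth C i * fps_nth (Psi \<gamma> ^ i) n)" .
  have "norm (\<Sum>i=1..n. fps_nth C i * fps_nth (Psi \<gamma> ^ i) n)
        \<le> (\<Sum>i=1..n. norm (fps_nth C i) * Re (fps_nth (Psi \<gamma> ^ i) n))"
  proof -
    have "norm (\<Sum>i=1..n. fps_nth C i * fps_nth (Psi \<gamma> ^ i) n) \<le> (\<Sum>i=1..n. norm (fps_nth C i * fps_nth (Psi \<gamma> ^ i) n))"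
      by (rule norm_sum)
    also have "\<dots> = (\<Sum>i=1..n. norm (fps_nth C i) * Re (fps_nth (Psi \<gamma> ^ i) n))"
      using Psi_pow_nn[OF g(1)] by (intro sum.cong refl) (simp add: norm_mult cmod_eq_Re)
    finally show ?thesis .
  qed
  also have "\<dots> \<le> (\<Sum>i=1..n. (1 - (norm (h 0))^2) * Re (fps_nth (Psi \<gamma> ^ i) n))"
    using Psi_pow_nn[OF g(1)] wC by (intro sum_mono mult_right_mono) auto
  also have "\<dots> = (1 - (norm (h 0))^2) * Re (\<Sum>i=1..n. fps_nth (Psi \<gamma> ^ i) n)"
    by (simp add: sum_distrib_left Re_sum)
  also have "(\<Sum>i=1..n. fps_nth (Psi \<gamma> ^ i) n) = (\<Sum>i=0..n. fps_nth (Psi \<gamma> ^ i) n)"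
    using n by (simp add: sum.atLeast_Suc_atMost)
  also have "\<dots> = complex_of_real (1 / (1 + \<gamma>))" by (rule Psi_sum[OF g(1) n])
  finally show ?thesis unfolding eqa by simp
qed

lemma circ_norm: "0 \<le> \<rho> \<Longrightarrow> norm (circlepath 0 \<rho> t) = \<rho>"
  by (simp add: circlepath norm_mult)

lemma circ_cnj: "cnj (circlepath 0 \<rho> t) * circlepath 0 \<rho> t = complex_of_real (\<rho>^2)"
proof -
  have "cnj (circlepath 0 \<rho> t) * circlepath 0 \<rho> t = complex_of_real ((norm (circlepath 0 \<rho> t))^2)"
    using complex_norm_square[of "circlepath 0 \<rho> t"] by (simp add: mult.commute)
  also have "norm (circlepath 0 \<rho> t) = \<bar>\<rho>\<bar>" by (simp add: circlepath norm_mult)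
  finally show ?thesis by simp
qed

lemma fourier_coeff:
  fixes f :: "complex \<Rightarrow> complex"
  assumes hol: "f holomorphic_on ball 0 1" and r: "0 < \<rho>" "\<rho> < 1"
  shows "((\<lambda>t. f (circlepath 0 \<rho> t) / (circlepath 0 \<rho> t) ^ n) has_integral ((deriv ^^ n) f 0 / fact n)) {0..1}"
proof -
  have sub: "cball 0 \<rho> \<subseteq> ball (0::complex) 1" using r by auto
  have contf: "continuous_on (cball 0 \<rho>) f"
    using holomorphic_on_imp_continuous_on[OF hol] continuous_on_subset sub by blast
  have holf: "f holomorphic_on ball 0 \<rho>" using hol by (rule holomorphic_on_subset) (use r in auto)
  have "((\<lambda>u. f u / (u - 0) ^ Suc n) has_contour_integral (2 * pi * \<i> / fact n * (deriv ^^ n) f 0)) (circlepath 0 \<rho>)"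
    by (rule Cauchy_has_contour_integral_higher_derivative_circlepath[OF contf holf]) (use r in simp)
  hence "((\<lambda>x. f (circlepath 0 \<rho> x) / (circlepath 0 \<rho> x) ^ Suc n * vector_derivative (circlepath 0 \<rho>) (at x within {0..1}))
          has_integral (2 * pi * \<i> / fact n * (deriv ^^ n) f 0)) {0..1}"
    by (simp add: has_contour_integral_def)
  moreover have "2 * pi * \<i> / fact n * (deriv ^^ n) f 0 = (2 * pi * \<i>) * ((deriv ^^ n) f 0 / fact n)"
    by simp
  ultimately have "((\<lambda>x. f (circlepath 0 \<rho> x) / (circlepath 0 \<rho> x) ^ Suc n * vector_derivative (circlepath 0 \<rho>) (at x within {0..1}))
          has_integral ((2 * pi * \<i>) * ((deriv ^^ n) f 0 / fact n))) {0..1}" by simp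
  hence "((\<lambda>x. (2 * pi * \<i>) * (f (circlepath 0 \<rho> x) / (circlepath 0 \<rho> x) ^ n))
          has_integral ((2 * pi * \<i>) * ((deriv ^^ n) f 0 / fact n))) {0..1}"
  proof (rule has_integral_eq[rotated])
    fix x :: real assume x: "x \<in> {0..1}"
    have nz: "circlepath 0 \<rho> x \<noteq> 0" using r by (simp add: circlepath)
    have vd: "vector_derivative (circlepath 0 \<rho>) (at x within {0..1}) = 2 * pi * \<i> * circlepath 0 \<rho> x"
      using x vector_derivative_circlepath01[of x 0 \<rho>] by (simp add: circlepath mult_ac)
    show "f (circlepath 0 \<rho> x) / (circlepath 0 \<rho> x) ^ Suc n * vector_derivative (circlepath 0 \<rho>) (at x within {0..1})
          = (2 * pi * \<i>) * (f (circlepath 0 \<rho> x) / (circlepath 0 \<rho> x) ^ n)"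
      unfolding vd using nz by (simp add: field_simps)
  qed
  thus ?thesis
    by (subst (asm) has_integral_mult_right_iff) auto
qed

lemma parseval:
  fixes f :: "complex \<Rightarrow> complex"
  assumes hol: "f holomorphic_on ball 0 1" and r: "0 < \<rho>" "\<rho> < 1"
  defines "c \<equiv> (\<lambda>n. (deriv ^^ n) f 0 / fact n)"
  shows "summable (\<lambda>n. (norm (c n))^2 * \<rho>^(2*n))"
    and "((\<lambda>t. (norm (f (circlepath 0 \<rho> t)))^2) has_integral (\<Sum>n. (norm (c n))^2 * \<rho>^(2*n))) {0..1}"
proof -
  define \<gamma> where "\<gamma> = circlepath 0 \<rho>"
  have ng: "norm (\<gamma> t) = \<rho>" for t using r by (simp add: \<gamma>_def circ_norm)
  have gin: "\<gamma> t \<in> ball 0 1" for t using ng r by simp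
  have pw: "(\<lambda>n. c n * z ^ n) sums f z" if "norm z < 1" for z
    using holomorphic_power_series[OF hol, of z] that by (simp add: c_def)
  define T where "T = (\<lambda>n t. cnj (c n) * cnj (\<gamma> t) ^ n * f (\<gamma> t))"
  have Tsum: "(\<lambda>n. T n t) sums complex_of_real ((norm (f (\<gamma> t)))^2)" for t
  proof -
    have "(\<lambda>n. cnj (c n * \<gamma> t ^ n)) sums cnj (f (\<gamma> t))"
      using sums_cnj[THEN iffD2, OF pw[of "\<gamma> t"]] gin[of t] by simp
    hence "(\<lambda>n. cnj (c n * \<gamma> t ^ n) * f (\<gamma> t)) sums (cnj (f (\<gamma> t)) * f (\<gamma> t))"
      by (rule sums_mult2)
    moreover have "cnj (f (\<gamma> t)) * f (\<gamma> t) = complex_of_real ((norm (f (\<gamma> t)))^2)"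
      using complex_norm_square[of "f (\<gamma> t)"] by (simp add: mult.commute)
    ultimately show ?thesis by (simp add: T_def)
  qed
  have contf: "continuous_on (cball 0 \<rho>) f"
    by (rule continuous_on_subset[OF holomorphic_on_imp_continuous_on[OF hol]]) (use r in auto)
  have "bounded (f ` cball 0 \<rho>)"
    by (rule compact_imp_bounded[OF compact_continuous_image[OF contf compact_cball]])
  then obtain B where "\<forall>y\<in>f ` cball 0 \<rho>. norm y \<le> B" unfolding bounded_iff by blast
  hence B: "\<And>z. z \<in> cball 0 \<rho> \<Longrightarrow> norm (f z) \<le> B" by blast
  have fB: "norm (f (\<gamma> t)) \<le> B" for t using B ng by simp
  define x where "x = (1 + \<rho>) / 2"
  have x: "\<rho> < x" "x < 1" using r by (auto simp: x_def)
  have smx: "summable (\<lambda>n. c n * complex_of_real x ^ n)"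
    using pw[of "complex_of_real x"] x r by (simp add: sums_iff)
  have smabs: "summable (\<lambda>n. norm (c n * complex_of_real \<rho> ^ n))"
    by (rule powser_insidea[OF smx]) (use x r in simp)
  have smM: "summable (\<lambda>n. norm (c n) * \<rho> ^ n * B)"
    using summable_mult2[OF smabs, of B] r by (simp add: norm_mult norm_power)
  have Tbd: "norm (T n t) \<le> norm (c n) * \<rho> ^ n * B" for n t
    using fB[of t] r by (simp add: T_def norm_mult norm_power ng mult_left_mono)
  have unif: "uniform_limit {0..1} (\<lambda>N t. \<Sum>n<N. T n t) (\<lambda>t. \<Sum>n. T n t) sequentially"
    by (rule Weierstrass_m_test[OF _ smM]) (rule Tbd)
  have contg: "continuous_on {0..1} (\<lambda>t. f (\<gamma> t))"
  proof -
    have "continuous_on {0..1} \<gamma>" unfolding \<gamma>_def using path_circlepath[of 0 \<rho>] by (simp add: path_def)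
    moreover have "continuous_on (\<gamma> ` {0..1}) f"
      using holomorphic_on_imp_continuous_on[OF hol] continuous_on_subset gin by blast
    ultimately show ?thesis using continuous_on_compose2 by blast
  qed
  have contT: "continuous_on {0..1} (\<lambda>t. \<Sum>n<N. T n t)" for N
  proof -
    have "continuous_on {0..1} \<gamma>" unfolding \<gamma>_def using path_circlepath[of 0 \<rho>] by (simp add: path_def)
    thus ?thesis unfolding T_def by (intro continuous_intros contg)
  qed
  obtain I J where I: "\<And>N. ((\<lambda>t. \<Sum>n<N. T n t) has_integral I N) {0..1}"
    and J: "((\<lambda>t. \<Sum>n. T n t) has_integral J) {0..1}" and IJ: "I \<longlonglongrightarrow> J"
    by (rule uniform_limit_integral[OF unif contT]) auto
  have Tint: "(T n has_integral complex_of_real ((norm (c n))^2 * \<rho>^(2*n))) {0..1}" for n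
  proof -
    have fc: "((\<lambda>t. f (\<gamma> t) / (\<gamma> t) ^ n) has_integral c n) {0..1}"
      unfolding \<gamma>_def c_def by (rule fourier_coeff[OF hol r])
    have A: "((\<lambda>t. (cnj (c n) * complex_of_real (\<rho>^(2*n))) * (f (\<gamma> t) / (\<gamma> t) ^ n)) has_integral
           (cnj (c n) * complex_of_real (\<rho>^(2*n))) * c n) {0..1}"
      by (rule has_integral_mult_right[OF fc])
    have eqT: "(cnj (c n) * complex_of_real (\<rho>^(2*n))) * (f (\<gamma> t) / (\<gamma> t) ^ n) = T n t" for t
    proof -
      have nz: "\<gamma> t \<noteq> 0" using ng[of t] r by auto
      have "cnj (\<gamma> t) ^ n * \<gamma> t ^ n = complex_of_real (\<rho>^(2*n))"
        using circ_cnj[of \<rho> t] by (simp add: \<gamma>_def power_mult_distrib[symmetric] power_mult)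
      hence "cnj (\<gamma> t) ^ n = complex_of_real (\<rho>^(2*n)) / \<gamma> t ^ n" using nz by (simp add: field_simps)
      thus ?thesis by (simp add: T_def)
    qed
    have v: "(cnj (c n) * complex_of_real (\<rho>^(2*n))) * c n = complex_of_real ((norm (c n))^2 * \<rho>^(2*n))"
    proof -
      have "cnj (c n) * c n = complex_of_real ((norm (c n))^2)"
        using complex_norm_square[of "c n"] by (simp add: mult.commute)
      moreover have "(cnj (c n) * complex_of_real (\<rho>^(2*n))) * c n = (cnj (c n) * c n) * complex_of_real (\<rho>^(2*n))"
        by (simp only: mult_ac)
      ultimately show ?thesis by (simp only: of_real_mult)
    qed
    from A have "(T n has_integral ((cnj (c n) * complex_of_real (\<rho>^(2*n))) * c n)) {0..1}"
      by (rule has_integral_eq[rotated]) (rule eqT)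
    thus ?thesis unfolding v .
  qed
  have IN: "I N = (\<Sum>n<N. complex_of_real ((norm (c n))^2 * \<rho>^(2*n)))" for N
    using has_integral_unique[OF I[of N] has_integral_sum[OF _ Tint]] by simp
  have sumsJ: "(\<lambda>n. complex_of_real ((norm (c n))^2 * \<rho>^(2*n))) sums J"
  proof -
    have "I = (\<lambda>N. \<Sum>n<N. complex_of_real ((norm (c n))^2 * \<rho>^(2*n)))" by (intro ext IN)
    thus ?thesis unfolding sums_def using IJ by simp
  qed
  have "((\<lambda>t. complex_of_real ((norm (f (\<gamma> t)))^2)) has_integral J) {0..1}"
    using J by (rule has_integral_eq[rotated]) (metis Tsum sums_unique)
  hence "((\<lambda>t. Re (complex_of_real ((norm (f (\<gamma> t)))^2))) has_integral Re J) {0..1}"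
    using has_integral_linear[OF _ bounded_linear_Re] unfolding o_def by blast
  hence Jre: "((\<lambda>t. (norm (f (\<gamma> t)))^2) has_integral Re J) {0..1}"
    by (simp only: Re_complex_of_real)
  have sumsR: "(\<lambda>n. (norm (c n))^2 * \<rho>^(2*n)) sums Re J"
    using sums_Re[OF sumsJ] by simp
  show "summable (\<lambda>n. (norm (c n))^2 * \<rho>^(2*n))" using sumsR by (simp add: sums_iff)
  show "((\<lambda>t. (norm (f (circlepath 0 \<rho> t)))^2) has_integral (\<Sum>n. (norm (c n))^2 * \<rho>^(2*n))) {0..1}"
    using Jre sumsR by (simp add: sums_iff \<gamma>_def)
qed

lemma shift_summable:
  fixes u :: "nat \<Rightarrow> real"
  assumes sm: "summable (\<lambda>n. (real n + 1)^2 * \<bar>u n\<bar> * K^n)" and K: "0 \<le> K" "K \<le> 1"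
  shows "summable (\<lambda>n. (if n = 0 then 0 else u (n - 1)) * K^n)"
    and "summable (\<lambda>n. (if n = 0 then 0 else real n * u (n - 1)) * K^n)"
proof -
  have b1: "norm (u n * K^Suc n) \<le> (real n + 1)^2 * \<bar>u n\<bar> * K^n" for n
  proof -
    have "norm (u n * K^Suc n) = \<bar>u n\<bar> * K^n * K" using K by (simp add: abs_mult)
    also have "\<dots> \<le> \<bar>u n\<bar> * K^n * 1" using K by (intro mult_left_mono) auto
    also have "\<dots> \<le> (real n + 1)^2 * (\<bar>u n\<bar> * K^n)"
    proof -
      have "1 \<le> (real n + 1)^2" by (rule one_le_power) simp
      from mult_right_mono[OF this, of "\<bar>u n\<bar> * K^n"] show ?thesis using K by simp
    qed
    finally show ?thesis by (simp add: mult_ac)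
  qed
  have b2: "norm ((real n + 1) * u n * K^Suc n) \<le> (real n + 1)^2 * \<bar>u n\<bar> * K^n" for n
  proof -
    have "norm ((real n + 1) * u n * K^Suc n) = (real n + 1) * (\<bar>u n\<bar> * K^n) * K" using K by (simp add: abs_mult)
    also have "\<dots> \<le> (real n + 1) * (\<bar>u n\<bar> * K^n) * 1" using K by (intro mult_left_mono) auto
    also have "\<dots> \<le> (real n + 1) * (real n + 1) * (\<bar>u n\<bar> * K^n)"
      using K by (simp add: mult_right_mono)
    finally show ?thesis by (simp add: power2_eq_square mult_ac)
  qed
  have "summable (\<lambda>n. u n * K^Suc n)"
    by (rule summable_comparison_test[OF _ sm]) (use b1 in blast)
  thus "summable (\<lambda>n. (if n = 0 then 0 else u (n - 1)) * K^n)"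
    by (subst summable_Suc_iff[symmetric]) simp
  have "summable (\<lambda>n. (real n + 1) * u n * K^Suc n)"
    by (rule summable_comparison_test[OF _ sm]) (use b2 in blast)
  thus "summable (\<lambda>n. (if n = 0 then 0 else real n * u (n - 1)) * K^n)"
    by (subst summable_Suc_iff[symmetric]) (simp add: add.commute)
qed

lemma L6:
  fixes u :: "nat \<Rightarrow> real"
  assumes sm: "\<And>x. 0 \<le> x \<Longrightarrow> x < 1 \<Longrightarrow> summable (\<lambda>n. (real n + 1)^2 * \<bar>u n\<bar> * x^n)"
    and nn: "\<And>x. 0 \<le> x \<Longrightarrow> x < 1 \<Longrightarrow> 0 \<le> (\<Sum>n. (real n + 1)^2 * u n * x^n)"
    and x: "0 \<le> x" "x < 1"
  shows "0 \<le> (\<Sum>n. u n * x^n)"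
proof -
  define e where "e = (\<lambda>n. if n = 0 then 0 else u (n - 1))"
  define q where "q = (\<lambda>n. if n = 0 then 0 else real n * u (n - 1))"
  have de: "diffs e n = (real n + 1) * u n" for n by (simp add: diffs_def e_def)
  have dq: "diffs q n = (real n + 1)^2 * u n" for n by (simp add: diffs_def q_def power2_eq_square add.commute)
  have sme: "summable (\<lambda>n. e n * K^n)" and smq: "summable (\<lambda>n. q n * K^n)" if "0 \<le> K" "K < 1" for K
    using shift_summable[OF sm[OF that] that(1)] that by (simp_all add: e_def q_def)
  have u0: "0 \<le> u 0" using nn[of 0] by simp
  define E where "E = (\<lambda>y::real. \<Sum>n. e n * y^n)"
  define R where "R = (\<lambda>y::real. \<Sum>n. q n * y^n)"
  define Q where "Q = (\<lambda>y::real. \<Sum>n. (real n + 1) * u n * y^n)"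
  have dR: "DERIV R y :> (\<Sum>n. (real n + 1)^2 * u n * y^n)" if y: "0 \<le> y" "y < 1" for y
  proof -
    have "DERIV R y :> (\<Sum>n. diffs q n * y^n)"
      unfolding R_def by (rule termdiffs_strong[OF smq[of "(1 + y) / 2"]]) (use y in auto)
    thus ?thesis by (simp add: dq)
  qed
  have dE: "DERIV E y :> Q y" if y: "0 \<le> y" "y < 1" for y
  proof -
    have "DERIV E y :> (\<Sum>n. diffs e n * y^n)"
      unfolding E_def by (rule termdiffs_strong[OF sme[of "(1 + y) / 2"]]) (use y in auto)
    thus ?thesis by (simp add: de Q_def)
  qed
  have Rnn: "0 \<le> R y" if y: "0 \<le> y" "y < 1" for y
  proof -
    have "R 0 \<le> R y"
      by (rule DERIV_nonneg_imp_nondecreasing[OF y(1)]) (use dR nn y in \<open>force\<close>)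
    moreover have "R 0 = 0" by (simp add: R_def q_def)
    ultimately show ?thesis by simp
  qed
  have RQ: "R y = y * Q y" if y: "0 \<le> y" "y < 1" for y
  proof -
    have smQ: "summable (\<lambda>n. (real n + 1) * u n * y^n)"
    proof (rule summable_comparison_test[OF _ sm[OF y]])
      show "\<exists>N. \<forall>n\<ge>N. norm ((real n + 1) * u n * y^n) \<le> (real n + 1)^2 * \<bar>u n\<bar> * y^n"
      proof (intro exI allI impI)
        fix n :: nat
        have "1 \<le> real n + 1" by simp
        from mult_right_mono[OF this, of "(real n + 1) * \<bar>u n\<bar> * y^n"]
        show "norm ((real n + 1) * u n * y^n) \<le> (real n + 1)^2 * \<bar>u n\<bar> * y^n"
          using y by (simp add: abs_mult power2_eq_square mult_ac)
      qed
    qed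
    hence "(\<lambda>n. y * ((real n + 1) * u n * y^n)) sums (y * Q y)"
      unfolding Q_def by (intro sums_mult summable_sums)
    hence "(\<lambda>n. q (Suc n) * y^Suc n) sums (y * Q y)" by (simp add: q_def mult_ac add.commute)
    from sums_Suc[OF this] have "(\<lambda>n. q n * y^n) sums (y * Q y)" by (simp add: q_def)
    thus ?thesis by (simp add: R_def sums_iff)
  qed
  have Qnn: "0 \<le> Q y" if y: "0 \<le> y" "y < 1" for y
  proof (cases "y = 0")
    case True thus ?thesis using u0 by (simp add: Q_def)
  next
    case False
    hence "0 < y" using y by simp
    thus ?thesis using Rnn[OF y] RQ[OF y] by (simp add: zero_le_mult_iff)
  qed
  have "E 0 \<le> E x"
    by (rule DERIV_nonneg_imp_nondecreasing[OF x(1)]) (use dE Qnn x in force)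
  moreover have "E 0 = 0" by (simp add: E_def e_def)
  ultimately have En: "0 \<le> E x" by simp
  show ?thesis
  proof (cases "x = 0")
    case True thus ?thesis using u0 by simp
  next
    case False
    have smu: "summable (\<lambda>n. u n * x^n)"
    proof (rule summable_comparison_test[OF _ sm[OF x]])
      show "\<exists>N. \<forall>n\<ge>N. norm (u n * x^n) \<le> (real n + 1)^2 * \<bar>u n\<bar> * x^n"
      proof (intro exI allI impI)
        fix n :: nat
        have "1 \<le> (real n + 1)^2" by (rule one_le_power) simp
        from mult_right_mono[OF this, of "\<bar>u n\<bar> * x^n"] show "norm (u n * x^n) \<le> (real n + 1)^2 * \<bar>u n\<bar> * x^n"
          using x by (simp add: abs_mult mult_ac)
      qed
    qed
    hence "(\<lambda>n. x * (u n * x^n)) sums (x * (\<Sum>n. u n * x^n))" by (intro sums_mult summable_sums)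
    hence "(\<lambda>n. e (Suc n) * x^Suc n) sums (x * (\<Sum>n. u n * x^n))" by (simp add: e_def mult_ac)
    from sums_Suc[OF this] have "E x = x * (\<Sum>n. u n * x^n)" by (simp add: E_def e_def sums_iff)
    with En False x show ?thesis by (simp add: zero_le_mult_iff)
  qed
qed

lemma deriv_coeff:
  "(deriv ^^ n) (deriv h) 0 / fact n = of_nat (Suc n) * ((deriv ^^ Suc n) h 0 / fact (Suc n))"
proof -
  have "(deriv ^^ Suc n) h = (deriv ^^ n) (deriv h)" by (simp only: funpow_Suc_right comp_def)
  moreover have "(fact (Suc n) :: complex) = of_nat (Suc n) * fact n" by (simp add: fact_Suc)
  ultimately show ?thesis by (simp add: field_simps del: of_nat_Suc)
qed

lemma sq_compare:
  fixes h g :: "complex \<Rightarrow> complex"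
  assumes holh: "h holomorphic_on ball 0 1" and holg: "g holomorphic_on ball 0 1"
    and der: "\<And>z. z \<in> ball 0 1 \<Longrightarrow> norm (deriv g z) \<le> k * norm (deriv h z)" and k: "0 \<le> k"
    and x: "0 \<le> x" "x < 1"
  defines "\<alpha> \<equiv> (\<lambda>n. (deriv ^^ n) h 0 / fact n)" and "\<beta> \<equiv> (\<lambda>n. (deriv ^^ n) g 0 / fact n)"
  shows "summable (\<lambda>n. (norm (\<alpha> (Suc n)))^2 * x^n)" "summable (\<lambda>n. (norm (\<beta> (Suc n)))^2 * x^n)"
    "(\<Sum>n. (norm (\<beta> (Suc n)))^2 * x^n) \<le> k^2 * (\<Sum>n. (norm (\<alpha> (Suc n)))^2 * x^n)"
proof -
  have hd: "deriv h holomorphic_on ball 0 1" by (rule holomorphic_deriv[OF holh]) simp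
  have gd: "deriv g holomorphic_on ball 0 1" by (rule holomorphic_deriv[OF holg]) simp
  define A where "A = (\<lambda>n. (real n + 1)^2 * (norm (\<alpha> (Suc n)))^2)"
  define B where "B = (\<lambda>n. (real n + 1)^2 * (norm (\<beta> (Suc n)))^2)"
  have nS: "norm (of_nat (Suc n) :: complex) = real n + 1" for n by (simp only: norm_of_nat)
  have cA: "(norm ((deriv ^^ n) (deriv h) 0 / fact n))^2 = A n" for n
    unfolding deriv_coeff A_def \<alpha>_def by (simp only: norm_mult power_mult_distrib nS)
  have cB: "(norm ((deriv ^^ n) (deriv g) 0 / fact n))^2 = B n" for n
    unfolding deriv_coeff B_def \<beta>_def by (simp only: norm_mult power_mult_distrib nS)
  have PA: "summable (\<lambda>n. A n * \<rho>^(2*n))" "((\<lambda>t. (norm (deriv h (circlepath 0 \<rho> t)))^2) has_integral (\<Sum>n. A n * \<rho>^(2*n))) {0..1}"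
    if "0 < \<rho>" "\<rho> < 1" for \<rho>
    using parseval[OF hd that] by (simp_all add: cA)
  have PB: "summable (\<lambda>n. B n * \<rho>^(2*n))" "((\<lambda>t. (norm (deriv g (circlepath 0 \<rho> t)))^2) has_integral (\<Sum>n. B n * \<rho>^(2*n))) {0..1}"
    if "0 < \<rho>" "\<rho> < 1" for \<rho>
    using parseval[OF gd that] by (simp_all add: cB)
  have cmp: "(\<Sum>n. B n * \<rho>^(2*n)) \<le> k^2 * (\<Sum>n. A n * \<rho>^(2*n))" if r: "0 < \<rho>" "\<rho> < 1" for \<rho>
  proof (rule has_integral_le[OF PB(2)[OF r] has_integral_mult_right[OF PA(2)[OF r]]])
    fix t :: real assume "t \<in> {0..1}"
    have "circlepath 0 \<rho> t \<in> ball 0 1" using r by (simp add: circ_norm)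
    from der[OF this] have "norm (deriv g (circlepath 0 \<rho> t)) \<le> k * norm (deriv h (circlepath 0 \<rho> t))" .
    hence "(norm (deriv g (circlepath 0 \<rho> t)))^2 \<le> (k * norm (deriv h (circlepath 0 \<rho> t)))^2"
      by (rule power_mono) simp
    thus "(norm (deriv g (circlepath 0 \<rho> t)))^2 \<le> k^2 * (norm (deriv h (circlepath 0 \<rho> t)))^2"
      by (simp add: power_mult_distrib)
  qed
  have smAB: "summable (\<lambda>n. A n * y^n) \<and> summable (\<lambda>n. B n * y^n)" if y: "0 \<le> y" "y < 1" for y
  proof -
    define \<rho> where "\<rho> = sqrt ((1 + y) / 2)"
    have r: "0 < \<rho>" "\<rho> < 1" using y by (auto simp: \<rho>_def real_sqrt_lt_1_iff)
    have r2: "\<rho>^2 = (1 + y) / 2" using y by (simp add: \<rho>_def)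
    have yle: "y^n \<le> \<rho>^(2*n)" for n
      using y by (simp add: power_mult r2 power_mono)
    have An: "0 \<le> A n" "0 \<le> B n" for n by (simp_all add: A_def B_def)
    show ?thesis
    proof
      show "summable (\<lambda>n. A n * y^n)"
        by (rule summable_comparison_test[OF _ PA(1)[OF r]])
           (use An yle y in \<open>auto intro!: mult_left_mono simp: abs_mult\<close>)
      show "summable (\<lambda>n. B n * y^n)"
        by (rule summable_comparison_test[OF _ PB(1)[OF r]])
           (use An yle y in \<open>auto intro!: mult_left_mono simp: abs_mult\<close>)
    qed
  qed
  define u where "u = (\<lambda>n. k^2 * (norm (\<alpha> (Suc n)))^2 - (norm (\<beta> (Suc n)))^2)"
  have uAB: "(real n + 1)^2 * u n = k^2 * A n - B n" for n by (simp add: u_def A_def B_def algebra_simps)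
  have sm6: "summable (\<lambda>n. (real n + 1)^2 * \<bar>u n\<bar> * y^n)" if y: "0 \<le> y" "y < 1" for y
  proof (rule summable_comparison_test[OF _ summable_add[OF summable_mult[OF conjunct1[OF smAB[OF y]], of "k^2"] conjunct2[OF smAB[OF y]]]])
    show "\<exists>N. \<forall>n\<ge>N. norm ((real n + 1)^2 * \<bar>u n\<bar> * y^n) \<le> k^2 * (A n * y^n) + B n * y^n"
    proof (intro exI allI impI)
      fix n :: nat
      have "\<bar>(real n + 1)^2 * u n\<bar> \<le> k^2 * A n + B n"
        unfolding uAB by (simp add: A_def B_def abs_le_iff)
      hence "\<bar>(real n + 1)^2 * u n\<bar> * y^n \<le> (k^2 * A n + B n) * y^n" using y by (intro mult_right_mono) auto
      thus "norm ((real n + 1)^2 * \<bar>u n\<bar> * y^n) \<le> k^2 * (A n * y^n) + B n * y^n"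
        using y by (simp add: abs_mult algebra_simps)
    qed
  qed
  have nn6: "0 \<le> (\<Sum>n. (real n + 1)^2 * u n * y^n)" if y: "0 \<le> y" "y < 1" for y
  proof (cases "y = 0")
    case True
    have "norm (deriv g 0) \<le> k * norm (deriv h 0)" using der[of 0] by simp
    hence "(norm (deriv g 0))^2 \<le> (k * norm (deriv h 0))^2" by (rule power_mono) simp
    thus ?thesis using True by (simp add: u_def \<alpha>_def \<beta>_def power_mult_distrib)
  next
    case False
    define \<rho> where "\<rho> = sqrt y"
    have r: "0 < \<rho>" "\<rho> < 1" using y False by (auto simp: \<rho>_def real_sqrt_lt_1_iff)
    have ry: "\<rho>^(2*n) = y^n" for n using y by (simp add: \<rho>_def power_mult)
    have sA: "summable (\<lambda>n. A n * y^n)" and sB: "summable (\<lambda>n. B n * y^n)" using smAB[OF y] by auto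
    have "(\<Sum>n. (real n + 1)^2 * u n * y^n) = (\<Sum>n. k^2 * (A n * y^n) - B n * y^n)"
    proof (rule suminf_cong)
      fix n
      have "(real n + 1)^2 * u n * y^n = (k^2 * A n - B n) * y^n" by (simp only: uAB)
      thus "(real n + 1)^2 * u n * y^n = k^2 * (A n * y^n) - B n * y^n" by (simp add: algebra_simps)
    qed
    also have "\<dots> = k^2 * (\<Sum>n. A n * y^n) - (\<Sum>n. B n * y^n)"
      using suminf_diff[OF summable_mult[OF sA, of "k^2"] sB] suminf_mult[OF sA, of "k^2"] by simp
    also have "\<dots> \<ge> 0" using cmp[OF r] by (simp add: ry)
    finally show ?thesis .
  qed
  have L: "0 \<le> (\<Sum>n. u n * x^n)" by (rule L6[OF sm6 nn6 x]) auto
  have le1: "(norm (\<alpha> (Suc n)))^2 * x^n \<le> A n * x^n" "(norm (\<beta> (Suc n)))^2 * x^n \<le> B n * x^n" for n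
  proof -
    have o: "1 \<le> (real n + 1)^2" by (rule one_le_power) simp
    have "(norm (\<alpha> (Suc n)))^2 \<le> (real n + 1)^2 * (norm (\<alpha> (Suc n)))^2"
      using mult_right_mono[OF o, of "(norm (\<alpha> (Suc n)))^2"] by simp
    moreover have "(norm (\<beta> (Suc n)))^2 \<le> (real n + 1)^2 * (norm (\<beta> (Suc n)))^2"
      using mult_right_mono[OF o, of "(norm (\<beta> (Suc n)))^2"] by simp
    ultimately show "(norm (\<alpha> (Suc n)))^2 * x^n \<le> A n * x^n" "(norm (\<beta> (Suc n)))^2 * x^n \<le> B n * x^n"
      using x unfolding A_def B_def by (auto intro!: mult_right_mono)
  qed
  show sa: "summable (\<lambda>n. (norm (\<alpha> (Suc n)))^2 * x^n)"
    by (rule summable_comparison_test[OF _ conjunct1[OF smAB[OF x]]]) (use le1 x in auto)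
  show sb: "summable (\<lambda>n. (norm (\<beta> (Suc n)))^2 * x^n)"
    by (rule summable_comparison_test[OF _ conjunct2[OF smAB[OF x]]]) (use le1 x in auto)
  have "(\<Sum>n. u n * x^n) = k^2 * (\<Sum>n. (norm (\<alpha> (Suc n)))^2 * x^n) - (\<Sum>n. (norm (\<beta> (Suc n)))^2 * x^n)"
  proof -
    have "(\<Sum>n. u n * x^n) = (\<Sum>n. k^2 * ((norm (\<alpha> (Suc n)))^2 * x^n) - (norm (\<beta> (Suc n)))^2 * x^n)"
      by (simp add: u_def algebra_simps)
    also have "\<dots> = k^2 * (\<Sum>n. (norm (\<alpha> (Suc n)))^2 * x^n) - (\<Sum>n. (norm (\<beta> (Suc n)))^2 * x^n)"
      using suminf_diff[OF summable_mult[OF sa, of "k^2"] sb] suminf_mult[OF sa, of "k^2"] by simp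
    finally show ?thesis .
  qed
  with L show "(\<Sum>n. (norm (\<beta> (Suc n)))^2 * x^n) \<le> k^2 * (\<Sum>n. (norm (\<alpha> (Suc n)))^2 * x^n)" by simp
qed

lemma ball_sub_Omega:
  assumes "0 \<le> \<gamma>" "\<gamma> < 1"
  shows "ball 0 1 \<subseteq> Omega \<gamma>"
proof
  fix z :: complex assume "z \<in> ball 0 1"
  hence z: "norm z < 1" by simp
  have nn: "norm (complex_of_real (\<gamma> / (1 - \<gamma>))) = \<gamma> / (1 - \<gamma>)"
    by (simp only: norm_of_real) (use assms in simp)
  have "dist (- complex_of_real (\<gamma> / (1 - \<gamma>))) z = norm (z + complex_of_real (\<gamma> / (1 - \<gamma>)))"
    by (metis dist_norm norm_minus_commute diff_minus_eq_add)
  also have "\<dots> \<le> norm z + norm (complex_of_real (\<gamma> / (1 - \<gamma>)))" by (rule norm_triangle_ineq)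
  also have "\<dots> = norm z + \<gamma> / (1 - \<gamma>)" by (simp only: nn)
  also have "\<dots> < 1 + \<gamma> / (1 - \<gamma>)" using z by simp
  also have "\<dots> = 1 / (1 - \<gamma>)" using assms by (simp add: field_simps)
  finally show "z \<in> Omega \<gamma>" by (simp add: Omega_def)
qed

lemma coeffs_from_sums:
  fixes h :: "complex \<Rightarrow> complex"
  assumes "\<And>z. z \<in> ball 0 1 \<Longrightarrow> (\<lambda>n. a n * z ^ n) sums h z"
  shows "a n = (deriv ^^ n) h 0 / fact n"
proof -
  have "h has_fps_expansion Abs_fps a"
  proof (rule has_fps_expansionI)
    have "eventually (\<lambda>z. z \<in> ball (0::complex) 1) (nhds 0)"
      by (rule eventually_nhds_in_open) auto
    thus "\<forall>\<^sub>F u in nhds 0. (\<lambda>n. fps_nth (Abs_fps a) n * u ^ n) sums h u"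
      by eventually_elim (use assms in simp)
  qed
  from fps_nth_fps_expansion[OF this, of n] show ?thesis by simp
qed

lemma amgm:
  fixes x t :: real
  assumes "0 < t"
  shows "x \<le> x^2 / (2 * t) + t / 2"
proof -
  have "0 \<le> (x - t)^2" by simp
  hence "2 * t * x \<le> x^2 + t^2" by (simp add: power2_eq_square algebra_simps)
  thus ?thesis using assms by (simp add: field_simps power2_eq_square)
qed

lemma part1:
  fixes h g :: "complex \<Rightarrow> complex"
  assumes g: "0 \<le> \<gamma>" "\<gamma> < 1" and k: "0 \<le> k" "k \<le> 1"
    and adm: "admissible \<gamma> k h g a b" and r: "0 \<le> r" "r \<le> (1 + \<gamma>) / (3 + 2 * k + \<gamma>)"
  shows "bohr_sum a b r \<le> 1"
proof -
  from adm have holh: "h holomorphic_on Omega \<gamma>" and holg: "g holomorphic_on Omega \<gamma>"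
    and bdh: "\<And>z. z \<in> Omega \<gamma> \<Longrightarrow> norm (h z) \<le> 1"
    and derg: "\<And>z. z \<in> Omega \<gamma> \<Longrightarrow> norm (deriv g z) \<le> k * norm (deriv h z)"
    and sa: "\<And>z. z \<in> ball 0 1 \<Longrightarrow> (\<lambda>n. a n * z ^ n) sums h z"
    and sb: "\<And>z. z \<in> ball 0 1 \<Longrightarrow> (\<lambda>n. b (n + 1) * z ^ (n + 1)) sums g z"
    unfolding admissible_def by auto
  have sub: "ball 0 1 \<subseteq> Omega \<gamma>" by (rule ball_sub_Omega[OF g])
  have holh1: "h holomorphic_on ball 0 1" using holh sub by (rule holomorphic_on_subset)
  have holg1: "g holomorphic_on ball 0 1" using holg sub by (rule holomorphic_on_subset)
  have der1: "\<And>z. z \<in> ball 0 1 \<Longrightarrow> norm (deriv g z) \<le> k * norm (deriv h z)" using derg sub by blast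
  have aeq: "a n = (deriv ^^ n) h 0 / fact n" for n by (rule coeffs_from_sums[OF sa])
  define b' where "b' = (\<lambda>n. if n = 0 then 0 else b n)"
  have sb': "(\<lambda>n. b' n * z ^ n) sums g z" if "z \<in> ball 0 1" for z
  proof -
    have "(\<lambda>n. b' (Suc n) * z ^ Suc n) sums g z" using sb[OF that] by (simp add: b'_def)
    from sums_Suc[OF this] show ?thesis by (simp add: b'_def)
  qed
  have beq: "b (Suc n) = (deriv ^^ Suc n) g 0 / fact (Suc n)" for n
    using coeffs_from_sums[OF sb', of "Suc n"] by (simp add: b'_def)
  have a0: "a 0 = h 0" using aeq[of 0] by simp
  define A where "A = norm (a 0)"
  have O0: "0 \<in> Omega \<gamma>" using sub by auto
  have A: "0 \<le> A" "A \<le> 1" using bdh[OF O0] a0 by (auto simp: A_def)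
  define c where "c = (1 - A^2) / (1 + \<gamma>)"
  have c0: "0 \<le> c" using A g by (simp add: c_def abs_square_le_1)
  have abd: "norm (a (Suc n)) \<le> c" for n
  proof -
    have e: "a (Suc n) = (deriv ^^ Suc n) h 0 / fact (Suc n)" by (rule aeq)
    have "norm ((deriv ^^ Suc n) h 0 / fact (Suc n)) \<le> (1 - (norm (h 0))^2) / (1 + \<gamma>)"
      by (rule coeff_bound_Omega[OF g holh bdh]) simp_all
    thus ?thesis unfolding e c_def A_def a0 .
  qed
  have r1: "r < 1"
  proof -
    have "(1 + \<gamma>) / (3 + 2 * k + \<gamma>) < 1" using g k by (simp add: divide_less_eq)
    thus ?thesis using r by simp
  qed
  have key: "2 * (1 + k) * r \<le> (1 + \<gamma>) * (1 - r)"
  proof -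
    have "r * (3 + 2 * k + \<gamma>) \<le> 1 + \<gamma>" using r g k by (simp add: le_divide_eq)
    thus ?thesis by (simp add: algebra_simps)
  qed
  show ?thesis
  proof (cases "r = 0")
    case True
    have "(\<Sum>n. norm (b (n + 1)) * r ^ (n + 1)) = 0" using True by simp
    moreover have "(\<Sum>n. norm (a n) * r ^ n) = A" using True powser_zero[of "\<lambda>n. norm (a n)"] by (simp add: A_def)
    ultimately show ?thesis using A by (simp add: bohr_sum_def)
  next
    case False
    hence rpos: "0 < r" using r by simp
    define R where "R = r / (1 - r)"
    have R0: "0 < R" using rpos r1 by (simp add: R_def)
    have geo1: "(\<lambda>n. r ^ Suc n) sums R"
      using sums_mult[OF geometric_sums[of r], of r] r r1 by (simp add: R_def)
    have geo0: "(\<lambda>n. r ^ n) sums (1 / (1 - r))" using geometric_sums[of r] r r1 by simp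
    have smA: "summable (\<lambda>n. norm (a (Suc n)) * r ^ Suc n)"
      by (rule summable_comparison_test[OF _ summable_mult[OF sums_summable[OF geo1], of c]])
         (use abd r in \<open>auto intro!: mult_right_mono\<close>)
    have SA: "(\<Sum>n. norm (a (Suc n)) * r ^ Suc n) \<le> c * R"
    proof -
      have "(\<Sum>n. norm (a (Suc n)) * r ^ Suc n) \<le> (\<Sum>n. c * r ^ Suc n)"
        by (rule suminf_le[OF _ smA summable_mult[OF sums_summable[OF geo1]]]) (use abd r in \<open>auto intro!: mult_right_mono\<close>)
      also have "\<dots> = c * R" using sums_unique[OF sums_mult[OF geo1, of c]] by simp
      finally show ?thesis .
    qed
    note SC = sq_compare[OF holh1 holg1 der1 k(1) r(1) r1]
    have sa2: "summable (\<lambda>n. (norm (a (Suc n)))^2 * r^n)" using SC(1) by (simp add: aeq)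
    have sb2: "summable (\<lambda>n. (norm (b (Suc n)))^2 * r^n)" using SC(2) by (simp add: beq)
    have cmp: "(\<Sum>n. (norm (b (Suc n)))^2 * r^n) \<le> k^2 * (\<Sum>n. (norm (a (Suc n)))^2 * r^n)"
      using SC(3) by (simp add: aeq beq)
    have asq: "(\<Sum>n. (norm (a (Suc n)))^2 * r^n) \<le> c^2 / (1 - r)"
    proof -
      have "(\<Sum>n. (norm (a (Suc n)))^2 * r^n) \<le> (\<Sum>n. c^2 * r^n)"
        by (rule suminf_le[OF _ sa2 summable_mult[OF sums_summable[OF geo0]]])
           (use abd r in \<open>auto intro!: mult_right_mono power_mono\<close>)
      also have "\<dots> = c^2 / (1 - r)" using sums_unique[OF sums_mult[OF geo0, of "c^2"]] by simp
      finally show ?thesis .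
    qed
    define Bs where "Bs = (\<Sum>n. (norm (b (Suc n)))^2 * r^n)"
    have Bs: "Bs \<le> k^2 * c^2 / (1 - r)"
    proof -
      have "Bs \<le> k^2 * (\<Sum>n. (norm (a (Suc n)))^2 * r^n)" using cmp by (simp add: Bs_def)
      also have "\<dots> \<le> k^2 * (c^2 / (1 - r))" using asq by (rule mult_left_mono) simp
      finally show ?thesis by simp
    qed
    have tb: "norm (b (Suc n)) * r ^ Suc n \<le> r / (2 * t) * ((norm (b (Suc n)))^2 * r^n) + t / 2 * r ^ Suc n"
      if t: "0 < t" for t n
    proof -
      have "norm (b (Suc n)) \<le> (norm (b (Suc n)))^2 / (2 * t) + t / 2" by (rule amgm[OF t])
      from mult_right_mono[OF this, of "r ^ Suc n"] r show ?thesis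
        by (simp add: algebra_simps)
    qed
    have smBt: "summable (\<lambda>n. r / (2 * t) * ((norm (b (Suc n)))^2 * r^n) + t / 2 * r ^ Suc n)" for t
      by (intro summable_add summable_mult sb2 sums_summable[OF geo1])
    have smB: "summable (\<lambda>n. norm (b (Suc n)) * r ^ Suc n)"
      by (rule summable_comparison_test[OF _ smBt[of 1]]) (use tb[of 1] r in auto)
    define S where "S = (\<Sum>n. norm (b (Suc n)) * r ^ Suc n)"
    have St: "S \<le> r / (2 * t) * Bs + t / 2 * R" if t: "0 < t" for t
    proof -
      have "S \<le> (\<Sum>n. r / (2 * t) * ((norm (b (Suc n)))^2 * r^n) + t / 2 * r ^ Suc n)"
        unfolding S_def by (rule suminf_le[OF _ smB smBt]) (use tb[OF t] in auto)
      also have "\<dots> = r / (2 * t) * Bs + t / 2 * R"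
        using sums_unique[OF sums_add[OF sums_mult[OF summable_sums[OF sb2], of "r / (2 * t)"] sums_mult[OF geo1, of "t / 2"]]]
        by (simp add: Bs_def)
      finally show ?thesis .
    qed
    have SB: "S \<le> k * c * R"
    proof (cases "k * c > 0")
      case True
      have "S \<le> r / (2 * (k * c)) * Bs + (k * c) / 2 * R" by (rule St[OF True])
      also have "\<dots> \<le> r / (2 * (k * c)) * (k^2 * c^2 / (1 - r)) + (k * c) / 2 * R"
        using Bs True rpos by (intro add_right_mono mult_left_mono) auto
      also have "\<dots> = k * c * R"
      proof -
        have d: "1 - r \<noteq> 0" "k * c \<noteq> 0" using r1 True by auto
        have eq: "r / (2 * (k * c)) * (k^2 * c^2 / (1 - r)) = (k * c) * (r / (1 - r)) / 2"
        proof -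
          have "k^2 * c^2 = (k * c) * (k * c)" by (simp add: power2_eq_square)
          hence "r / (2 * (k * c)) * (k^2 * c^2 / (1 - r)) = r / (2 * (k * c)) * ((k * c) * (k * c) / (1 - r))" by simp
          also have "\<dots> = (k * c) * (r / (1 - r)) / 2" using d(2) by (simp add: field_simps)
          finally show ?thesis .
        qed
        hence "r / (2 * (k * c)) * (k^2 * c^2 / (1 - r)) = (k * c) * R / 2" by (simp only: R_def)
        moreover have "(k * c) / 2 * R = (k * c) * R / 2" by simp
        ultimately show ?thesis by linarith
      qed
      finally show ?thesis .
    next
      case False
      have "0 \<le> k * c" using k c0 by simp
      hence kc: "k * c = 0" using False by linarith
      have Bs0: "Bs \<le> 0" using Bs kc by (simp add: power_mult_distrib[symmetric])
      show ?thesis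
      proof (rule ccontr)
        assume "\<not> S \<le> k * c * R"
        hence Sp: "0 < S" using kc by simp
        have "S \<le> r / (2 * (S / R)) * Bs + (S / R) / 2 * R" by (rule St) (use Sp R0 in simp)
        also have "r / (2 * (S / R)) * Bs \<le> 0"
        proof -
          have "0 \<le> r / (2 * (S / R))" using rpos Sp R0 by simp
          thus ?thesis using Bs0 by (rule mult_nonneg_nonpos)
        qed
        finally have "S \<le> S / 2" using R0 by simp
        thus False using Sp by simp
      qed
    qed
    have sumA: "(\<Sum>n. norm (a n) * r ^ n) = A + (\<Sum>n. norm (a (Suc n)) * r ^ Suc n)"
      using sums_Suc[OF summable_sums[OF smA]] by (simp add: sums_iff A_def add.commute)
    have "bohr_sum a b r = A + (\<Sum>n. norm (a (Suc n)) * r ^ Suc n) + S"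
      by (simp add: bohr_sum_def sumA S_def)
    also have "\<dots> \<le> A + c * R + k * c * R" using SA SB by simp
    also have "\<dots> \<le> 1"
    proof -
      have R2: "(1 + k) * R \<le> (1 + \<gamma>) / 2"
        using key r1 g by (simp add: R_def divide_le_eq field_simps)
      have "c * R + k * c * R = (1 - A^2) * ((1 + k) * R) / (1 + \<gamma>)"
        by (simp add: c_def add_divide_distrib[symmetric] algebra_simps)
      also have "\<dots> \<le> (1 - A^2) * ((1 + \<gamma>) / 2) / (1 + \<gamma>)"
        using R2 A g by (intro divide_right_mono mult_left_mono) (auto simp: abs_square_le_1)
      also have "\<dots> = (1 - A^2) / 2"
      proof -
        have "1 + \<gamma> \<noteq> 0" using g by simp
        thus ?thesis by (simp add: field_simps)
      qed
      finally have "c * R + k * c * R \<le> (1 - A^2) / 2" .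
      moreover have "A + (1 - A^2) / 2 \<le> 1"
      proof -
        have "0 \<le> (1 - A)^2" by simp
        hence "2 * A \<le> 1 + A^2" by (simp add: power2_eq_square algebra_simps)
        thus ?thesis by (simp add: field_simps)
      qed
      ultimately show ?thesis by linarith
    qed
    finally show ?thesis .
  qed
qed

lemma Omega_Re:
  assumes g: "0 \<le> \<gamma>" "\<gamma> < 1" and z: "z \<in> Omega \<gamma>"
  shows "Re z < 1"
proof -
  have "norm (z + complex_of_real (\<gamma> / (1 - \<gamma>))) < 1 / (1 - \<gamma>)"
    using z by (simp add: Omega_def dist_norm norm_minus_commute add.commute)
  moreover have "Re z + \<gamma> / (1 - \<gamma>) \<le> norm (z + complex_of_real (\<gamma> / (1 - \<gamma>)))"
    using complex_Re_le_cmod[of "z + complex_of_real (\<gamma> / (1 - \<gamma>))"] by simp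
  ultimately have "Re z + \<gamma> / (1 - \<gamma>) < 1 / (1 - \<gamma>)" by linarith
  hence "(Re z + \<gamma> / (1 - \<gamma>)) * (1 - \<gamma>) < (1 / (1 - \<gamma>)) * (1 - \<gamma>)"
    by (rule mult_strict_right_mono) (use g in simp)
  moreover have "(Re z + \<gamma> / (1 - \<gamma>)) * (1 - \<gamma>) = Re z * (1 - \<gamma>) + \<gamma>"
    using g by (simp add: distrib_right)
  moreover have "(1 / (1 - \<gamma>)) * (1 - \<gamma>) = 1" using g by simp
  ultimately have lt: "Re z * (1 - \<gamma>) + \<gamma> < 1" by simp
  show ?thesis
  proof (rule ccontr)
    assume "\<not> Re z < 1"
    hence "0 \<le> (Re z - 1) * (1 - \<gamma>)" using g by simp
    thus False using lt by (simp add: algebra_simps)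
  qed
qed

lemma Omega_psi:
  assumes g: "0 \<le> \<gamma>" "\<gamma> < 1" and z: "z \<in> Omega \<gamma>"
  shows "norm z < norm (1 + complex_of_real \<gamma> - complex_of_real \<gamma> * z)"
proof -
  define x where "x = Re z"
  define y where "y = Im z"
  have "norm (z + complex_of_real (\<gamma> / (1 - \<gamma>))) < 1 / (1 - \<gamma>)"
    using z by (simp add: Omega_def dist_norm norm_minus_commute add.commute)
  hence "(norm (z + complex_of_real (\<gamma> / (1 - \<gamma>))))^2 < (1 / (1 - \<gamma>))^2"
    by (rule power_strict_mono) auto
  hence H: "(x + \<gamma> / (1 - \<gamma>))^2 + y^2 < (1 / (1 - \<gamma>))^2"
    by (simp add: cmod_power2 x_def y_def)
  have g1: "0 < 1 - \<gamma>" using g by simp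
  have "(1 - \<gamma>)^2 * ((x + \<gamma> / (1 - \<gamma>))^2 + y^2) < (1 - \<gamma>)^2 * (1 / (1 - \<gamma>))^2"
    by (rule mult_strict_left_mono[OF H]) (use g1 in simp)
  hence "((1 - \<gamma>) * (x + \<gamma> / (1 - \<gamma>)))^2 + ((1 - \<gamma>) * y)^2 < ((1 - \<gamma>) * (1 / (1 - \<gamma>)))^2"
    by (simp only: power_mult_distrib[of "1 - \<gamma>"] distrib_left[of "(1 - \<gamma>)^2"])
  moreover have "(1 - \<gamma>) * (x + \<gamma> / (1 - \<gamma>)) = (1 - \<gamma>) * x + \<gamma>" using g1 by (simp add: field_simps)
  moreover have "(1 - \<gamma>) * (1 / (1 - \<gamma>)) = 1" using g1 by simp
  ultimately have H2: "((1 - \<gamma>) * x + \<gamma>)^2 + ((1 - \<gamma>) * y)^2 < 1" by simp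
  define E where "E = (1 - \<gamma>) * (x^2 + y^2) + 2 * \<gamma> * x - (1 + \<gamma>)"
  have "((1 - \<gamma>) * x + \<gamma>)^2 + ((1 - \<gamma>) * y)^2 - 1 = (1 - \<gamma>) * E"
    by (simp add: E_def power2_eq_square algebra_simps)
  hence "(1 - \<gamma>) * E < 0" using H2 by simp
  hence E: "E < 0" using g1 by (simp add: mult_less_0_iff)
  have "(norm (1 + complex_of_real \<gamma> - complex_of_real \<gamma> * z))^2 - (norm z)^2 = - (1 + \<gamma>) * E"
    unfolding cmod_power2 E_def x_def y_def by (simp add: power2_eq_square algebra_simps)
  hence "(norm z)^2 < (norm (1 + complex_of_real \<gamma> - complex_of_real \<gamma> * z))^2"
    using E g by (simp add: mult_less_0_iff) (smt (verit) mult_neg_neg)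
  thus ?thesis by (rule power_less_imp_less_base) simp
qed

lemma div_cancel: "a \<noteq> 0 \<Longrightarrow> (x / a) / (y / a) = x / (y::complex)"
  by (cases "y = 0") (simp_all add: field_simps)

lemma part2:
  assumes g: "0 \<le> \<gamma>" "\<gamma> < 1" and k: "0 \<le> k" "k \<le> 1"
    and r: "(1 + \<gamma>) / (3 + 2 * k + \<gamma>) < r" "r < 1"
  shows "\<exists>h g a b. admissible \<gamma> k h g a b \<and> bohr_sum a b r > 1"
proof -
  have pos3: "0 < 3 + 2 * k + \<gamma>" using g k by simp
  define \<delta> where "\<delta> = r * (3 + 2 * k + \<gamma>) - (1 + \<gamma>)"
  have \<delta>: "0 < \<delta>" using r(1) pos3 by (simp add: \<delta>_def divide_less_eq mult.commute)
  have rpos: "0 < r" using r(1) g pos3 by (smt (verit) divide_pos_pos)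
  define \<epsilon> where "\<epsilon> = min (1/2) (\<delta> / (2 * r * (2 + k)))"
  have \<epsilon>: "0 < \<epsilon>" "\<epsilon> \<le> 1/2" "\<epsilon> * (r * (2 + k)) \<le> \<delta> / 2"
  proof -
    show "0 < \<epsilon>" using \<delta> rpos k by (simp add: \<epsilon>_def)
    show "\<epsilon> \<le> 1/2" unfolding \<epsilon>_def by (rule min.cobounded1)
    have "\<epsilon> \<le> \<delta> / (2 * r * (2 + k))" by (simp add: \<epsilon>_def)
    hence "\<epsilon> * (r * (2 + k)) \<le> \<delta> / (2 * r * (2 + k)) * (r * (2 + k))"
      using rpos k by (intro mult_right_mono) auto
    also have "\<dots> = \<delta> / 2"
    proof -
      have X: "r * (2 + k) \<noteq> 0" using rpos k by simp
      have "\<delta> / (2 * r * (2 + k)) * (r * (2 + k)) = \<delta> / (2 * (r * (2 + k))) * (r * (2 + k))"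
        by (simp only: mult.assoc)
      also have "\<dots> = \<delta> / 2" using X by simp
      finally show ?thesis .
    qed
    finally show "\<epsilon> * (r * (2 + k)) \<le> \<delta> / 2" .
  qed
  define s where "s = 1 - \<epsilon>"
  have s: "0 < s" "s < 1" using \<epsilon> by (auto simp: s_def)
  define cq where "cq = (\<gamma> + s) / (1 + \<gamma>)"
  define C where "C = (1 - s^2) / (1 + \<gamma>)"
  have g1: "0 < 1 + \<gamma>" using g by simp
  have cq: "0 < cq" "cq < 1" using g s by (auto simp: cq_def field_simps)
  have C: "0 < C" using s g1 by (simp add: C_def abs_square_less_1)
  define aa where "aa = (\<lambda>n. if n = 0 then complex_of_real s else - complex_of_real (C * cq ^ (n - 1)))"
  define bb where "bb = (\<lambda>n. complex_of_real k * aa n)"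
  define hh where "hh = (\<lambda>z. complex_of_real s - complex_of_real C * z / (1 - complex_of_real cq * z))"
  define gg where "gg = (\<lambda>z. complex_of_real k * (hh z - complex_of_real s))"
  have den: "1 - complex_of_real cq * z \<noteq> 0" if z: "z \<in> Omega \<gamma>" for z
  proof
    assume "1 - complex_of_real cq * z = 0"
    hence "complex_of_real cq * z = 1" by simp
    hence "Re (complex_of_real cq * z) = Re 1" by (rule arg_cong)
    hence e: "cq * Re z = 1" by simp
    have z1: "Re z < 1" by (rule Omega_Re[OF g z])
    have "cq * Re z < 1"
    proof (cases "Re z \<le> 0")
      case True thus ?thesis using cq mult_nonneg_nonpos[of cq "Re z"] by simp
    next
      case False
      hence "cq * Re z < 1 * 1" using cq z1 by (intro mult_strict_mono) auto
      thus ?thesis by simp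
    qed
    thus False using e by simp
  qed
  have openO: "open (Omega \<gamma>)" by (simp add: Omega_def)
  have holh: "hh holomorphic_on Omega \<gamma>"
    unfolding hh_def by (intro holomorphic_intros) (use den in auto)
  have holg: "gg holomorphic_on Omega \<gamma>"
    unfolding gg_def by (intro holomorphic_intros holh)
  have bdh: "norm (hh z) \<le> 1" if z: "z \<in> Omega \<gamma>" for z
  proof -
    define A where "A = 1 + complex_of_real \<gamma> - complex_of_real \<gamma> * z"
    have zA: "norm z < norm A" unfolding A_def by (rule Omega_psi[OF g z])
    hence A0: "A \<noteq> 0" by auto
    define w where "w = z / A"
    have w: "norm w < 1" using zA A0 by (simp add: w_def norm_divide divide_less_eq)
    have sw: "1 - complex_of_real s * w \<noteq> 0"
    proof
      assume "1 - complex_of_real s * w = 0"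
      hence "norm (complex_of_real s * w) = 1" by (metis eq_iff_diff_eq_0 norm_one)
      moreover have "norm (complex_of_real s * w) < 1"
        using s w by (simp add: norm_mult) (metis less_trans mult_less_cancel_right1 norm_ge_zero not_le mult_le_one less_eq_real_def)
      ultimately show False by simp
    qed
    have cqz: "1 - complex_of_real cq * z \<noteq> 0" by (rule den[OF z])
    have cqc: "complex_of_real cq * (1 + complex_of_real \<gamma>) = complex_of_real \<gamma> + complex_of_real s"
    proof -
      have "cq * (1 + \<gamma>) = \<gamma> + s" using g1 by (simp add: cq_def)
      hence "complex_of_real (cq * (1 + \<gamma>)) = complex_of_real (\<gamma> + s)" by simp
      thus ?thesis by simp
    qed
    have Cc: "complex_of_real C * (1 + complex_of_real \<gamma>) = 1 - complex_of_real s * complex_of_real s"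
    proof -
      have "C * (1 + \<gamma>) = 1 - s * s" using g1 by (simp add: C_def power2_eq_square)
      hence "complex_of_real (C * (1 + \<gamma>)) = complex_of_real (1 - s * s)" by simp
      thus ?thesis by simp
    qed
    have e1: "complex_of_real s * A - z = (1 + complex_of_real \<gamma>) * (complex_of_real s * (1 - complex_of_real cq * z) - complex_of_real C * z)"
    proof -
      have "(1 + complex_of_real \<gamma>) * (complex_of_real s * (1 - complex_of_real cq * z) - complex_of_real C * z)
          = complex_of_real s * (1 + complex_of_real \<gamma>) - complex_of_real s * (complex_of_real cq * (1 + complex_of_real \<gamma>)) * z
            - (complex_of_real C * (1 + complex_of_real \<gamma>)) * z"
        by (simp add: algebra_simps)
      also have "\<dots> = complex_of_real s * A - z" unfolding cqc Cc by (simp add: A_def algebra_simps)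
      finally show ?thesis by simp
    qed
    have e2: "A - complex_of_real s * z = (1 + complex_of_real \<gamma>) * (1 - complex_of_real cq * z)"
    proof -
      have "(1 + complex_of_real \<gamma>) * (1 - complex_of_real cq * z) = (1 + complex_of_real \<gamma>) - (complex_of_real cq * (1 + complex_of_real \<gamma>)) * z"
        by (simp add: algebra_simps)
      also have "\<dots> = A - complex_of_real s * z" unfolding cqc by (simp add: A_def algebra_simps)
      finally show ?thesis by simp
    qed
    have g1c: "1 + complex_of_real \<gamma> \<noteq> 0" by (rule g1nz[OF g(1)])
    have n1: "complex_of_real s - w = (complex_of_real s * A - z) / A" using A0 by (simp add: w_def field_simps)
    have n2: "1 - complex_of_real s * w = (A - complex_of_real s * z) / A" using A0 by (simp add: w_def field_simps)
    have "(complex_of_real s - w) / (1 - complex_of_real s * w) = (complex_of_real s * A - z) / (A - complex_of_real s * z)"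
      unfolding n1 n2 by (rule div_cancel[OF A0])
    also have "\<dots> = (complex_of_real s * (1 - complex_of_real cq * z) - complex_of_real C * z) / (1 - complex_of_real cq * z)"
      unfolding e1 e2 using g1c by simp
    also have "\<dots> = hh z" using cqz by (simp add: hh_def field_simps)
    finally have hz: "hh z = - ((w - complex_of_real s) / (1 - cnj (complex_of_real s) * w))"
      by (simp add: minus_divide_left)
    have "norm ((w - complex_of_real s) / (1 - cnj (complex_of_real s) * w)) < 1"
      by (rule mobius_lt[OF w]) (use s in simp)
    thus ?thesis unfolding hz by simp
  qed
  have derg: "norm (deriv gg z) \<le> k * norm (deriv hh z)" if z: "z \<in> Omega \<gamma>" for z
  proof -
    have dh: "(hh has_field_derivative deriv hh z) (at z)"
      by (rule holomorphic_derivI[OF holh openO z])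
    have "(gg has_field_derivative complex_of_real k * deriv hh z) (at z)"
      unfolding gg_def by (rule derivative_eq_intros dh refl | simp)+
    hence "deriv gg z = complex_of_real k * deriv hh z" by (rule DERIV_imp_deriv)
    thus ?thesis using k by (simp add: norm_mult)
  qed
  have tail: "(\<lambda>n. aa (Suc n) * z ^ Suc n) sums (- complex_of_real C * z / (1 - complex_of_real cq * z))"
    if z: "norm z < 1" for z
  proof -
    have "norm (complex_of_real cq * z) < 1"
      using cq z by (simp add: norm_mult) (metis less_trans mult_less_cancel_right1 norm_ge_zero not_le mult_le_one less_eq_real_def)
    hence "(\<lambda>n. (complex_of_real cq * z) ^ n) sums (1 / (1 - complex_of_real cq * z))" by (rule geometric_sums)
    hence "(\<lambda>n. (- complex_of_real C * z) * (complex_of_real cq * z) ^ n) sums ((- complex_of_real C * z) * (1 / (1 - complex_of_real cq * z)))"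
      by (rule sums_mult)
    moreover have "aa (Suc n) * z ^ Suc n = (- complex_of_real C * z) * (complex_of_real cq * z) ^ n" for n
      by (simp add: aa_def power_mult_distrib)
    ultimately show ?thesis by simp
  qed
  have sa: "(\<lambda>n. aa n * z ^ n) sums hh z" if "z \<in> ball 0 1" for z
  proof -
    have "norm z < 1" using that by simp
    from sums_Suc[OF tail[OF this]] show ?thesis by (simp add: aa_def hh_def)
  qed
  have sb: "(\<lambda>n. bb (n + 1) * z ^ (n + 1)) sums gg z" if "z \<in> ball 0 1" for z
  proof -
    have "norm z < 1" using that by simp
    from sums_mult[OF tail[OF this], of "complex_of_real k"]
    show ?thesis by (simp add: bb_def gg_def hh_def mult.assoc)
  qed
  have adm: "admissible \<gamma> k hh gg aa bb"
    unfolding admissible_def using holh holg bdh derg sa sb by blast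
  have cr: "0 < cq * r" "cq * r < 1" using cq rpos r(2)
    by (auto simp: mult_pos_pos) (metis less_trans mult_less_cancel_right1 not_le mult_le_one less_eq_real_def)
  have geo: "(\<lambda>n. C * r * (cq * r) ^ n) sums (C * r / (1 - cq * r))"
    using sums_mult[OF geometric_sums[of "cq * r"], of "C * r"] cr by simp
  have ta: "norm (aa (Suc n)) * r ^ Suc n = C * r * (cq * r) ^ n" for n
    using C cq rpos by (simp add: aa_def norm_mult norm_power abs_mult power_mult_distrib)
  have sumA: "(\<Sum>n. norm (aa n) * r ^ n) = s + C * r / (1 - cq * r)"
  proof -
    have fe: "(\<lambda>n. norm (aa (Suc n)) * r ^ Suc n) = (\<lambda>n. C * r * (cq * r) ^ n)" by (rule ext) (rule ta)
    have "(\<lambda>n. norm (aa (Suc n)) * r ^ Suc n) sums (C * r / (1 - cq * r))" unfolding fe by (rule geo)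
    from sums_Suc[OF this] show ?thesis using s by (simp add: aa_def sums_iff)
  qed
  have sumB: "(\<Sum>n. norm (bb (n + 1)) * r ^ (n + 1)) = k * (C * r / (1 - cq * r))"
  proof -
    have "(\<lambda>n. k * (norm (aa (Suc n)) * r ^ Suc n)) sums (k * (C * r / (1 - cq * r)))"
    proof -
      have fe: "(\<lambda>n. k * (norm (aa (Suc n)) * r ^ Suc n)) = (\<lambda>n. k * (C * r * (cq * r) ^ n))" by (rule ext) (simp only: ta)
      show ?thesis unfolding fe by (rule sums_mult[OF geo])
    qed
    thus ?thesis using k by (simp add: bb_def norm_mult sums_iff mult.assoc)
  qed
  have D: "0 < 1 - cq * r" using cr by simp
  have big: "1 < s + (1 + k) * (C * r / (1 - cq * r))"
  proof -
    have L: "1 + \<gamma> < (1 + k) * (1 + s) * r + (\<gamma> + s) * r"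
    proof -
      have "(1 + k) * (1 + s) * r + (\<gamma> + s) * r = r * (3 + 2 * k + \<gamma>) - \<epsilon> * (r * (2 + k))"
        by (simp add: s_def algebra_simps)
      also have "\<dots> = 1 + \<gamma> + \<delta> - \<epsilon> * (r * (2 + k))" by (simp add: \<delta>_def)
      finally show ?thesis using \<epsilon>(3) \<delta> by linarith
    qed
    have Dg: "(1 + \<gamma>) * (1 - cq * r) = 1 + \<gamma> - (\<gamma> + s) * r" using g1 by (simp add: cq_def field_simps)
    have "(1 - s) * ((1 + \<gamma>) * (1 - cq * r)) < (1 - s) * ((1 + k) * (1 + s) * r)"
      using L s by (intro mult_strict_left_mono) (auto simp: Dg)
    hence "(1 - s) * (1 - cq * r) * (1 + \<gamma>) < (1 + k) * ((1 - s) * (1 + s)) * r"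
      by (simp add: algebra_simps)
    hence "(1 - s) * (1 - cq * r) < (1 + k) * C * r"
      using g1 by (simp add: C_def power2_eq_square field_simps algebra_simps)
    hence "1 - s < (1 + k) * C * r / (1 - cq * r)" using D by (simp add: field_simps)
    thus ?thesis by simp
  qed
  have "bohr_sum aa bb r = s + (1 + k) * (C * r / (1 - cq * r))"
    unfolding bohr_sum_def sumA sumB by (simp add: algebra_simps add_divide_distrib)
  with big have "1 < bohr_sum aa bb r" by simp
  with adm show ?thesis by blast
qed

theorem theorem4:
  fixes \<gamma> k :: real
  assumes "0 \<le> \<gamma>" "\<gamma> < 1" "0 \<le> k" "k \<le> 1"
  shows "(\<forall>h g a b r. admissible \<gamma> k h g a b \<and> 0 \<le> r \<and> r \<le> (1 + \<gamma>) / (3 + 2 * k + \<gamma>)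
            \<longrightarrow> bohr_sum a b r \<le> 1)
       \<and> (\<forall>r. (1 + \<gamma>) / (3 + 2 * k + \<gamma>) < r \<and> r < 1
            \<longrightarrow> (\<exists>h g a b. admissible \<gamma> k h g a b \<and> bohr_sum a b r > 1))"
    using part1[OF assms] part2[OF assms] by blast

end
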